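(* Let $G$ be a tree on node set $V$, $\lambda>0$, and let $T_1,\dots,T_\ell$ be independent complete traces of the cascade process with $p=1$ and rate $\lambda$ on $G$ (with arbitrary sources). If $\{u,v\}$ is not an edge of $G$ (with $u\ne v$), then Algorithm 1 sets $c(u,v)>\lambda^{-1}$ with probability at least $1-c_2\cdot c_3^{\ell}$, for some absolute constants $c_2<\infty$ and $c_3<1$.
   Context: Cascade process with $p=1$ and rate $\lambda$ from a source $s$: every edge receives an independent length drawn from $\mathrm{Exp}(\lambda)$; the infection time $t(v)$ is the shortest-path distance from $s$. A complete trace records the infection time of every node; $t_i(v)$ denotes the infection time of $v$ in trace $T_i$. Algorithm 1 (tree reconstruction): for every pair of nodes $u,v$, let $c(u,v)$ be the median of $\{|t_i(u)-t_i(v)|\}_{i=1}^{\ell}$; if there exist a node $q$ and traces $T_i,T_j$ with $t_i(q)<t_i(u)<t_i(v)$ and $t_j(q)<t_j(v)<t_j(u)$, set $c(u,v)=\infty$. Output the minimum spanning tree of the complete graph on $V$ with respect to the costs $c(u,v)$. *)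

theory Defs
  imports "HOL-Probability.Probability"
begin

definition is_path :: "'a set \<Rightarrow> 'a set set \<Rightarrow> 'a \<Rightarrow> 'a \<Rightarrow> 'a list \<Rightarrow> bool" where
  "is_path V E x y p \<longleftrightarrow> p \<noteq> [] \<and> hd p = x \<and> last p = y \<and> distinct p \<and> set p \<subseteq> V \<and>
     (\<forall>i. i + 1 < length p \<longrightarrow> {p ! i, p ! (i + 1)} \<in> E)"

definition is_tree :: "'a set \<Rightarrow> 'a set set \<Rightarrow> bool" where
  "is_tree V E \<longleftrightarrow> finite V \<and> V \<noteq> {} \<and>
     (\<forall>e\<in>E. \<exists>x y. e = {x, y} \<and> x \<noteq> y \<and> x \<in> V \<and> y \<in> V) \<and>
     (\<forall>x\<in>V. \<forall>y\<in>V. \<exists>!p. is_path V E x y p)"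

definition path_len :: "('a set \<Rightarrow> real) \<Rightarrow> 'a list \<Rightarrow> real" where
  "path_len w p = sum_list (map (\<lambda>(a, b). w {a, b}) (zip p (tl p)))"

text \<open>Infection time = shortest-path distance from the source s to v
  (the minimum is over simple paths, which suffices for nonnegative lengths).\<close>

definition infection_time :: "'a set \<Rightarrow> 'a set set \<Rightarrow> ('a set \<Rightarrow> real) \<Rightarrow> 'a \<Rightarrow> 'a \<Rightarrow> real" where
  "infection_time V E w s v = Inf {path_len w p | p. is_path V E s v p}"

definition median :: "real list \<Rightarrow> real" where
  "median xs = (let ys = sort xs; n = length xs in
     if even n then (ys ! (n div 2 - 1) + ys ! (n div 2)) / 2 else ys ! (n div 2))"

text \<open>Cost c(u,v) computed by Algorithm 1 from the traces t 0, ..., t (l-1)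
  (t i v = infection time of v in trace i).\<close>

definition alg_cost :: "'a set \<Rightarrow> (nat \<Rightarrow> 'a \<Rightarrow> real) \<Rightarrow> nat \<Rightarrow> 'a \<Rightarrow> 'a \<Rightarrow> ereal" where
  "alg_cost V t l u v =
     (if \<exists>q\<in>V. \<exists>i<l. \<exists>j<l. t i q < t i u \<and> t i u < t i v \<and> t j q < t j v \<and> t j v < t j u
      then \<infinity>
      else ereal (median (map (\<lambda>i. \<bar>t i u - t i v\<bar>) [0..<l])))"

text \<open>Probability space of l independent traces: in each trace every edge gets an
  independent Exp(lambda) length.\<close>

definition trace_space :: "'a set set \<Rightarrow> real \<Rightarrow> nat \<Rightarrow> (nat \<Rightarrow> 'a set \<Rightarrow> real) measure" where
  "trace_space E lam l =
     PiM {..<l} (\<lambda>_. PiM E (\<lambda>_. density lborel (exponential_density lam)))"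

end

theory Submission
  imports Defs
begin

lemma path_len_Cons2: "path_len w (a # b # p) = w {a, b} + path_len w (b # p)"
  by (simp add: path_len_def)
lemma path_len_single[simp]: "path_len w [a] = 0"
  by (simp add: path_len_def)

lemma path_len_append:
  "Q \<noteq> [] \<Longrightarrow> path_len w (Q @ R) = path_len w Q + path_len w (last Q # R)"
proof (induction Q rule: induct_list012)
  case (3 a b Q)
  then show ?case by (simp add: path_len_Cons2)
qed auto

lemma path_len_seg:
  "path_len w (map ((!) P) [j..<Suc (j + d)]) = (\<Sum>i\<in>{j..<j+d}. w {P!i, P!Suc i})"
proof (induction d arbitrary: j)
  case 0 then show ?case by simp
next
  case (Suc d)
  have "[j..<Suc (j + Suc d)] = j # Suc j # [Suc (Suc j)..<Suc (Suc j + d)]"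
    by (simp add: upt_rec)
  hence e: "map ((!) P) [j..<Suc (j + Suc d)] = P!j # map ((!) P) [Suc j..<Suc (Suc j + d)]"
    by (simp add: upt_rec)
  have e2: "map ((!) P) [Suc j..<Suc (Suc j + d)] = P!Suc j # map ((!) P) [Suc (Suc j)..<Suc (Suc j + d)]"
    by (simp add: upt_rec)
  show ?case unfolding e e2 path_len_Cons2
    using Suc[of "Suc j"] e2 by (simp add: sum.atLeast_Suc_lessThan)
qed

lemma tree_path_ex: "is_tree V E \<Longrightarrow> x \<in> V \<Longrightarrow> y \<in> V \<Longrightarrow> \<exists>p. is_path V E x y p"
  unfolding is_tree_def by (metis ex1_implies_ex)

lemma last_take_Suc: "k < length Q \<Longrightarrow> last (take (Suc k) Q) = Q!k"
  by (simp add: take_Suc_conv_app_nth)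

lemma tree_path_unique: "is_tree V E \<Longrightarrow> x \<in> V \<Longrightarrow> y \<in> V \<Longrightarrow> is_path V E x y p \<Longrightarrow> is_path V E x y q \<Longrightarrow> p = q"
  unfolding is_tree_def by blast

lemma infection_time_eq:
  assumes "is_tree V E" "s \<in> V" "x \<in> V" "is_path V E s x p"
  shows "infection_time V E w s x = path_len w p"
proof -
  have "{path_len w p | p. is_path V E s x p} = {path_len w p}"
    using tree_path_unique[OF assms(1-3)] assms(4) by blast
  thus ?thesis unfolding infection_time_def by simp
qed

lemma proj_ex:
  assumes "is_tree V E" "s \<in> V" "P \<noteq> []" "set P \<subseteq> V"
  shows "\<exists>j Q. j < length P \<and> is_path V E s (P!j) Q \<and> (\<forall>k<length Q - 1. Q!k \<notin> set P)"
proof -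
  let ?R = "\<lambda>Q. \<exists>j<length P. is_path V E s (P!j) Q"
  have "P!0 \<in> V" using assms by auto
  then obtain Q0 where "is_path V E s (P!0) Q0" using tree_path_ex[OF assms(1,2)] by blast
  hence "?R Q0" using assms(3) by auto
  then obtain Q where RQ: "?R Q" and min: "\<And>Q'. ?R Q' \<Longrightarrow> length Q \<le> length Q'"
    using ex_has_least_nat[of ?R Q0 length] by blast
  then obtain j where j: "j < length P" "is_path V E s (P!j) Q" by blast
  have "\<forall>k<length Q - 1. Q!k \<notin> set P"
  proof (intro allI impI notI)
    fix k assume k: "k < length Q - 1" "Q!k \<in> set P"
    then obtain j' where j': "j' < length P" "P!j' = Q!k" by (metis in_set_conv_nth)
    have "is_path V E s (P!j') (take (Suc k) Q)"
      using j(2) k(1) j'(2) unfolding is_path_def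
      by (auto simp: hd_take last_take_Suc dest: in_set_takeD)
    hence "length Q \<le> length (take (Suc k) Q)" using min j'(1) by blast
    thus False using k(1) by simp
  qed
  thus ?thesis using j by blast
qed

lemma path_extend:
  assumes P: "is_path V E a b P" and Q: "is_path V E s (P!j) Q"
    and disj: "\<forall>k<length Q - 1. Q!k \<notin> set P" and jm: "j \<le> m" "m < length P"
  shows "is_path V E s (P!m) (Q @ map ((!) P) [Suc j..<Suc m])"
proof -
  define R where "R = map ((!) P) [Suc j..<Suc m]"
  define L where "L = length Q"
  have Qne: "Q \<noteq> []" and hdQ: "hd Q = s" and lastQ: "last Q = P!j" and dQ: "distinct Q"
    and sQ: "set Q \<subseteq> V" and eQ: "\<And>i. i + 1 < length Q \<Longrightarrow> {Q ! i, Q ! (i + 1)} \<in> E"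
    using Q unfolding is_path_def by auto
  have dP: "distinct P" and sP: "set P \<subseteq> V" and eP: "\<And>i. i + 1 < length P \<Longrightarrow> {P ! i, P ! (i + 1)} \<in> E"
    using P unfolding is_path_def by auto
  have L1: "L \<ge> 1" using Qne L_def by (cases Q) auto
  have lenR: "length R = m - j" using jm by (auto simp: R_def)
  have key: "(Q @ R) ! (L - 1 + t) = P ! (j + t)" if "t \<le> m - j" for t
  proof (cases t)
    case 0
    then show ?thesis using L1 lastQ Qne by (simp add: L_def nth_append last_conv_nth)
  next
    case (Suc t')
    then have "L - 1 + t = L + t'" using L1 by simp
    then have "(Q @ R) ! (L - 1 + t) = R ! t'" by (simp add: nth_append L_def)
    also have "\<dots> = P ! (j + t)" unfolding R_def using that Suc jm by (subst nth_map_upt) auto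
    finally show ?thesis .
  qed
  have last: "last (Q @ R) = P!m"
  proof (cases "m = j")
    case True then show ?thesis using lastQ by (simp add: R_def)
  next
    case False
    then have "R \<noteq> []" using jm by (simp add: R_def)
    then show ?thesis using jm False by (simp add: R_def last_map)
  qed
  have setR: "set R \<subseteq> set P" using jm by (auto simp: R_def)
  have dR: "distinct R" unfolding R_def using dP jm
    by (auto simp: distinct_map inj_on_def nth_eq_iff_index_eq)
  have disjQR: "set Q \<inter> set R = {}"
  proof (rule ccontr)
    assume "set Q \<inter> set R \<noteq> {}"
    then obtain x where x: "x \<in> set Q" "x \<in> set R" by blast
    then obtain k where k: "k < length Q" "Q!k = x" by (metis in_set_conv_nth)
    obtain i where i: "Suc j \<le> i" "i < Suc m" "x = P!i" using x(2) by (auto simp: R_def)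
    show False
    proof (cases "k < length Q - 1")
      case True then show False using disj k x setR by blast
    next
      case False
      then have "k = length Q - 1" using k by simp
      then have "x = P!j" using lastQ Qne k by (simp add: last_conv_nth)
      then show False using i dP jm by (simp add: nth_eq_iff_index_eq)
    qed
  qed
  have edges: "{(Q @ R) ! i, (Q @ R) ! (i + 1)} \<in> E" if "i + 1 < length (Q @ R)" for i
  proof (cases "i + 1 < L")
    case True then show ?thesis using eQ by (simp add: nth_append L_def)
  next
    case False
    define t where "t = i - (L - 1)"
    have i_eq: "i = L - 1 + t" using False L1 by (simp add: t_def)
    have t_le: "t + 1 \<le> m - j" using that False lenR L1 by (simp add: t_def L_def)
    have "(Q @ R) ! i = P ! (j + t)" using key[of t] t_le i_eq by simp
    moreover have "(Q @ R) ! (i + 1) = P ! (j + t + 1)" using key[of "t+1"] t_le i_eq L1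
      by (simp add: add.assoc)
    moreover have "j + t + 1 < length P" using t_le jm by simp
    ultimately show ?thesis using eP by simp
  qed
  show ?thesis unfolding is_path_def R_def[symmetric]
    using Qne hdQ last dQ dR disjQR sQ setR sP edges by auto
qed

lemma path_extend_len:
  assumes "Q \<noteq> []" "last Q = P!j" "j \<le> m"
  shows "path_len w (Q @ map ((!) P) [Suc j..<Suc m]) = path_len w Q + (\<Sum>i\<in>{j..<m}. w {P!i, P!Suc i})"
proof -
  have "last Q # map ((!) P) [Suc j..<Suc m] = map ((!) P) [j..<Suc (j + (m - j))]"
    using assms by (simp add: upt_rec)
  then show ?thesis using path_len_append[OF assms(1), of w] path_len_seg[of w P j "m - j"] assms(3)
    by simp
qed

lemma is_path_rev: "is_path V E a b P \<Longrightarrow> is_path V E b a (rev P)"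
  unfolding is_path_def
proof (intro conjI allI impI; (elim conjE)?)
  fix i assume *: "P \<noteq> []" "\<forall>i. i + 1 < length P \<longrightarrow> {P ! i, P ! (i + 1)} \<in> E" "i + 1 < length (rev P)"
  then have "{P ! (length P - Suc (Suc i)), P ! (length P - Suc (Suc i) + 1)} \<in> E" by auto
  moreover have "length P - Suc (Suc i) + 1 = length P - Suc i" using *(3) by simp
  ultimately show "{rev P ! i, rev P ! (i + 1)} \<in> E" using *(3) by (simp add: rev_nth insert_commute)
qed (auto simp: hd_rev last_rev)

lemma is_path_edges: "is_path V E a b p \<Longrightarrow> i < length p - 1 \<Longrightarrow> {p!i, p!Suc i} \<in> E"
  unfolding is_path_def by auto

lemma path_len_nth: "path_len w p = (\<Sum>i<length p - 1. w {p!i, p!Suc i})"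
  unfolding path_len_def sum_list_sum_nth by (rule sum.cong) (auto simp: nth_tl lessThan_atLeast0)

lemma trace_times:
  assumes tree: "is_tree V E" and P: "is_path V E u v P" and s: "s \<in> V"
  obtains j Q where "j < length P" "is_path V E s (P!j) Q"
    "\<And>w m. j \<le> m \<Longrightarrow> m < length P \<Longrightarrow>
        infection_time V E w s (P!m) = path_len w Q + (\<Sum>i\<in>{j..<m}. w {P!i, P!Suc i})"
    "\<And>w. infection_time V E w s u = path_len w Q + (\<Sum>i<j. w {P!i, P!Suc i})"
proof -
  have Pne: "P \<noteq> []" and sP: "set P \<subseteq> V" and hdP: "hd P = u" using P unfolding is_path_def by auto
  obtain j Q where j: "j < length P" and Q: "is_path V E s (P!j) Q" and disj: "\<forall>k<length Q - 1. Q!k \<notin> set P"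
    using proj_ex[OF tree s Pne sP] by blast
  have Qne: "Q \<noteq> []" and lastQ: "last Q = P!j" using Q unfolding is_path_def by auto
  have A: "infection_time V E w s (P!m) = path_len w Q + (\<Sum>i\<in>{j..<m}. w {P!i, P!Suc i})"
    if "j \<le> m" "m < length P" for w m
  proof -
    have "is_path V E s (P!m) (Q @ map ((!) P) [Suc j..<Suc m])"
      by (rule path_extend[OF P Q disj that])
    moreover have "P!m \<in> V" using sP that by auto
    ultimately show ?thesis using infection_time_eq[OF tree s] path_extend_len[OF Qne lastQ that(1)] by metis
  qed
  define K where "K = length P - 1"
  have lenP: "length P = Suc K" using Pne by (simp add: K_def)
  have rP: "is_path V E v u (rev P)" by (rule is_path_rev[OF P])
  have rj: "P!j = rev P ! (K - j)" using j lenP by (simp add: rev_nth Suc_diff_le)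
  have Q': "is_path V E s (rev P ! (K - j)) Q" using Q rj by simp
  have disj': "\<forall>k<length Q - 1. Q!k \<notin> set (rev P)" using disj by simp
  have B: "infection_time V E w s u = path_len w Q + (\<Sum>i<j. w {P!i, P!Suc i})" for w
  proof -
    have K1: "K - j \<le> K" "K < length (rev P)" using lenP by auto
    have "is_path V E s (rev P ! K) (Q @ map ((!) (rev P)) [Suc (K - j)..<Suc K])"
      by (rule path_extend[OF rP Q' disj' K1])
    moreover have "rev P ! K = u" using lenP hdP Pne by (simp add: rev_nth hd_conv_nth)
    ultimately have pth: "is_path V E s u (Q @ map ((!) (rev P)) [Suc (K - j)..<Suc K])" by simp
    have uV: "u \<in> V" using P unfolding is_path_def by auto
    have "infection_time V E w s u = path_len w (Q @ map ((!) (rev P)) [Suc (K - j)..<Suc K])"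
      by (rule infection_time_eq[OF tree s uV pth])
    also have "\<dots> = path_len w Q + (\<Sum>i\<in>{K - j..<K}. w {rev P!i, rev P!Suc i})"
      using path_extend_len[OF Qne _ K1(1)] lastQ rj by simp
    also have "(\<Sum>i\<in>{K - j..<K}. w {rev P!i, rev P!Suc i}) = (\<Sum>i<j. w {P!i, P!Suc i})"
    proof (rule sum.reindex_bij_witness[of _ "\<lambda>r. K - 1 - r" "\<lambda>i. K - 1 - i"])
      fix a assume a: "a \<in> {K - j..<K}"
      show "K - 1 - (K - 1 - a) = a" "K - 1 - a \<in> {..<j}" using a by auto
      have "rev P ! a = P ! Suc (K - 1 - a)" "rev P ! Suc a = P ! (K - 1 - a)"
        using a j lenP by (auto simp: rev_nth Suc_diff_Suc)
      then show "w {P ! (K - 1 - a), P ! Suc (K - 1 - a)} = w {rev P ! a, rev P ! Suc a}"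
        by (simp add: insert_commute)
    next
      fix b assume "b \<in> {..<j}"
      then show "K - 1 - (K - 1 - b) = b" "K - 1 - b \<in> {K - j..<K}" using j lenP by auto
    qed
    finally show ?thesis .
  qed
  show ?thesis using that[OF j Q A B] .
qed



lemma sorted_nth_le_iff:
  "sorted ys \<Longrightarrow> k < length ys \<Longrightarrow> (ys ! k \<le> a) \<longleftrightarrow> k < length (filter (\<lambda>x. x \<le> a) ys)"
proof (induction ys arbitrary: k)
  case Nil then show ?case by simp
next
  case (Cons y ys)
  show ?case
  proof (cases "y \<le> a")
    case True
    then show ?thesis using Cons by (cases k) auto
  next
    case False
    have "filter (\<lambda>x. x \<le> a) (y # ys) = []" using False Cons.prems(1) by (auto simp: filter_empty_conv)
    moreover have "(y # ys) ! k \<ge> y" using Cons.prems by (cases k) auto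
    ultimately show ?thesis using False by auto
  qed
qed

lemma sort_nth_le_iff:
  fixes xs :: "real list"
  shows "k < length xs \<Longrightarrow> (sort xs ! k \<le> a) \<longleftrightarrow> k < length (filter (\<lambda>x. x \<le> a) xs)"
proof -
  have "length (filter (\<lambda>x. x \<le> a) (sort xs)) = length (filter (\<lambda>x. x \<le> a) xs)"
    by (metis mset_filter mset_sort size_mset)
  then show "k < length xs \<Longrightarrow> (sort xs ! k \<le> a) \<longleftrightarrow> k < length (filter (\<lambda>x. x \<le> a) xs)"
    using sorted_nth_le_iff[of "sort xs" k a] by simp
qed

lemma median_le:
  fixes xs :: "real list"
  assumes "median xs \<le> h"
  shows "length xs \<le> 2 * length (filter (\<lambda>x. x \<le> h) xs)"
proof -
  define n where "n = length xs"
  show ?thesis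
  proof (cases "n = 0")
    case True then show ?thesis by (simp add: n_def)
  next
    case n0: False
    show ?thesis
    proof (cases "even n")
      case True
      have s: "sort xs ! (n div 2 - 1) \<le> sort xs ! (n div 2)"
        using n0 True by (intro sorted_nth_mono) (auto simp: n_def)
      have "sort xs ! (n div 2 - 1) \<le> h"
        using assms True s unfolding median_def Let_def n_def[symmetric] by simp
      moreover have "n div 2 - 1 < length xs" using n0 unfolding n_def by (cases xs) auto
      ultimately have "n div 2 - 1 < length (filter (\<lambda>x. x \<le> h) xs)"
        using sort_nth_le_iff[of "n div 2 - 1" xs h] by simp
      then show ?thesis using True n0 by (simp add: n_def[symmetric]) presburger
    next
      case False
      have "sort xs ! (n div 2) \<le> h"
        using assms False unfolding median_def Let_def n_def[symmetric] by simp
      moreover have "n div 2 < length xs" using n0 by (simp add: n_def)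
      ultimately have "n div 2 < length (filter (\<lambda>x. x \<le> h) xs)"
        using sort_nth_le_iff[of "n div 2" xs h] by simp
      then show ?thesis using False by (simp add: n_def[symmetric])
    qed
  qed
qed

lemma cut_exists:
  fixes j :: "nat \<Rightarrow> nat" and K l :: nat and D :: "nat \<Rightarrow> real" and ew :: "nat \<Rightarrow> nat \<Rightarrow> real" and T :: "nat \<Rightarrow> nat \<Rightarrow> real"
  defines "tu \<equiv> \<lambda>i. D i + (\<Sum>r<j i. ew i r)"
  defines "tv \<equiv> \<lambda>i. D i + (\<Sum>r\<in>{j i..<K}. ew i r)"
  assumes jK: "\<And>i. i < l \<Longrightarrow> j i \<le> K"
    and pos: "\<And>i r. i < l \<Longrightarrow> r < K \<Longrightarrow> 0 < ew i r"
    and T: "\<And>i m. i < l \<Longrightarrow> j i \<le> m \<Longrightarrow> m \<le> K \<Longrightarrow> T i m = D i + (\<Sum>r\<in>{j i..<m}. ew i r)"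
    and H: "\<And>a b m. a < l \<Longrightarrow> b < l \<Longrightarrow> m \<le> K \<Longrightarrow>
              \<not> (T a m < tu a \<and> tu a < tv a \<and> T b m < tv b \<and> tv b < tu b)"
  shows "\<exists>c \<in> insert 0 (j ` {..<l}). \<forall>i<l. (j i \<le> c \<longrightarrow> tu i \<le> tv i) \<and> (c < j i \<longrightarrow> tv i \<le> tu i)"
proof -
  define U where "U = {i. i < l \<and> tu i < tv i}"
  define c where "c = Max (insert 0 (j ` U))"
  have finU: "finite U" by (simp add: U_def)
  have cmem: "c \<in> insert 0 (j ` U)" unfolding c_def using finU by (intro Max_in) auto
  have cge: "j i \<le> c" if "i \<in> U" for i unfolding c_def using finU that by (intro Max_ge) auto
  have sum_nonneg': "0 \<le> (\<Sum>r\<in>A. ew i r)" if "i < l" "A \<subseteq> {..<K}" for i A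
    using pos[OF that(1)] that(2) by (intro sum_nonneg) (auto intro: less_imp_le)
  have j0: "tu i \<le> tv i" if "i < l" "j i = 0" for i
  proof -
    have "{0..<K} \<subseteq> {..<K}" by auto
    then show ?thesis using that sum_nonneg'[of i "{0..<K}"] by (simp add: tu_def tv_def)
  qed
  have jK': "tv i \<le> tu i" if "i < l" "j i = K" for i
    using that sum_nonneg'[of i "{..<K}"] by (simp add: tu_def tv_def)
  have "\<forall>i<l. (j i \<le> c \<longrightarrow> tu i \<le> tv i) \<and> (c < j i \<longrightarrow> tv i \<le> tu i)"
  proof (intro allI impI conjI)
    fix i assume i: "i < l" "c < j i"
    then have "i \<notin> U" using cge by fastforce
    then show "tv i \<le> tu i" using i by (auto simp: U_def)
  next
    fix i assume i: "i < l" "j i \<le> c"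
    show "tu i \<le> tv i"
    proof (rule ccontr)
      assume vfirst: "\<not> tu i \<le> tv i"
      then have ji: "j i \<noteq> 0" using j0 i(1) by blast
      then have "c \<noteq> 0" using i by simp
      then obtain a where a: "a \<in> U" "j a = c" using cmem by auto
      have al: "a < l" and ua: "tu a < tv a" using a by (auto simp: U_def)
      have jaK: "j a < K" using jK[OF al] jK'[OF al] ua by force
      have ja1: "j a \<ge> 1" using a \<open>c \<noteq> 0\<close> by simp
      have T1: "T a (j a) = D a" using T[OF al, of "j a"] jaK by simp
      have "(\<Sum>r<j a. ew a r) > 0" using ja1 jaK pos[OF al] by (intro sum_pos) (auto simp: lessThan_empty_iff)
      then have T1': "T a (j a) < tu a" using T1 by (simp add: tu_def)
      have split: "(\<Sum>r\<in>{j i..<K}. ew i r) = (\<Sum>r\<in>{j i..<j a}. ew i r) + (\<Sum>r\<in>{j a..<K}. ew i r)"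
        using i a jaK by (intro sum.atLeastLessThan_concat[symmetric]) auto
      have "(\<Sum>r\<in>{j a..<K}. ew i r) > 0" using jaK pos[OF i(1)] by (intro sum_pos) auto
      then have T2: "T i (j a) < tv i" using T[OF i(1), of "j a"] i a jaK split by (simp add: tv_def)
      show False using H[OF al i(1), of "j a"] T1' ua T2 vfirst jaK by simp
    qed
  qed
  moreover have "c \<in> insert 0 (j ` {..<l})" using cmem by (auto simp: U_def)
  ultimately show ?thesis by blast
qed



abbreviation expM :: "real \<Rightarrow> real measure" where
  "expM lam \<equiv> density lborel (exponential_density lam)"

lemma space_expM[simp]: "space (expM lam) = UNIV" by simp
lemma sets_expM[simp]: "sets (expM lam) = sets borel" by simp

lemma exp_Icc:
  assumes lam: "0 < lam" and a: "0 \<le> a" "a \<le> b"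
  shows "emeasure (expM lam) {a..b} = ennreal (exp (- lam * a) - exp (- lam * b))"
proof -
  have "emeasure (expM lam) {a..b} = (\<integral>\<^sup>+ x. ennreal (exponential_density lam x) * indicator {a..b} x \<partial>lborel)"
    by (subst emeasure_density) auto
  also have "\<dots> = ennreal ((\<lambda>x. - exp (- lam * x)) b - (\<lambda>x. - exp (- lam * x)) a)"
  proof (rule nn_integral_FTC_Icc)
    show "exponential_density lam \<in> borel_measurable borel" by simp
    fix x assume x: "x \<in> {a..b}"
    then have x0: "0 \<le> x" using a by auto
    have "((\<lambda>x. - exp (- lam * x)) has_real_derivative (exp (- lam * x) * lam)) (at x)"
      by (auto intro!: derivative_eq_intros)
    then show "((\<lambda>x. - exp (- lam * x)) has_real_derivative exponential_density lam x) (at x)"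
      using x0 by (simp add: exponential_density_def mult.commute mult.left_commute)
    show "0 \<le> exponential_density lam x" using lam by (rule exponential_density_nonneg)
  qed (use a in auto)
  finally show ?thesis by simp
qed

lemma exp_atMost:
  assumes lam: "0 < lam" and a: "0 \<le> a"
  shows "emeasure (expM lam) {..a} = ennreal (1 - exp (- lam * a))"
  using emeasure_erlang_density[OF lam, of 0 a] a by (simp add: erlang_CDF_0)

lemma exp_atMost0:
  assumes lam: "0 < lam"
  shows "emeasure (expM lam) {..0} = 0"
  using exp_atMost[OF lam, of 0] by simp

lemma exp_half:
  assumes lam: "0 < lam"
  shows "(\<integral>\<^sup>+ x. ennreal (exponential_density lam x) * ennreal (exp (- lam * x)) \<partial>lborel) = ennreal (1/2)"
proof -
  have "(\<integral>\<^sup>+ x. ennreal (exponential_density lam x) * ennreal (exp (- lam * x)) \<partial>lborel)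
      = (\<integral>\<^sup>+ x. ennreal (1/2) * ennreal (exponential_density (2*lam) x) \<partial>lborel)"
  proof (rule nn_integral_cong)
    fix x :: real
    have eq: "exponential_density lam x * exp (- lam * x) = 1/2 * exponential_density (2*lam) x"
      by (simp add: exponential_density_def exp_add[symmetric] algebra_simps)
    have e1: "ennreal (exponential_density lam x) * ennreal (exp (- lam * x)) = ennreal (exponential_density lam x * exp (- lam * x))"
      by (rule ennreal_mult[symmetric]) (use lam in \<open>auto simp: exponential_density_nonneg\<close>)
    have e2: "ennreal (1/2) * ennreal (exponential_density (2*lam) x) = ennreal (1/2 * exponential_density (2*lam) x)"
      by (rule ennreal_mult[symmetric]) (use lam in \<open>auto simp: exponential_density_nonneg\<close>)
    show "ennreal (exponential_density lam x) * ennreal (exp (- lam * x)) = ennreal (1/2) * ennreal (exponential_density (2*lam) x)"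
      by (simp only: e1 e2 eq)
  qed
  also have "\<dots> = ennreal (1/2) * (\<integral>\<^sup>+ x. ennreal (exponential_density (2*lam) x) \<partial>lborel)"
    by (rule nn_integral_cmult) simp
  also have "(\<integral>\<^sup>+ x. ennreal (exponential_density (2*lam) x) \<partial>lborel) = 1"
  proof -
    interpret prob_space "expM (2*lam)" using lam by (intro prob_space_exponential_density) simp
    have "emeasure (expM (2*lam)) UNIV = 1" using emeasure_space_1 by simp
    moreover have "emeasure (expM (2*lam)) UNIV = (\<integral>\<^sup>+ x. ennreal (exponential_density (2*lam) x) \<partial>lborel)"
      by (subst emeasure_density) auto
    ultimately show ?thesis by simp
  qed
  finally show ?thesis by simp
qed

lemma L_core:
  assumes lam: "0 < lam" and c: "0 \<le> c" and t: "0 \<le> t"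
  shows "(\<integral>\<^sup>+ y. (\<integral>\<^sup>+ y'. (if c \<le> y' - y \<and> y' - y \<le> c + t then 1 else 0) \<partial>expM lam) \<partial>expM lam)
         \<le> ennreal ((1 - exp (- lam * t)) / 2)"
proof -
  interpret X: prob_space "expM lam" using lam by (rule prob_space_exponential_density)
  have meas: "(\<lambda>y. \<integral>\<^sup>+ y'. (if c \<le> y' - y \<and> y' - y \<le> c + t then 1 else 0) \<partial>expM lam) \<in> borel_measurable lborel"
    by measurable
  have inner: "(\<integral>\<^sup>+ y'. (if c \<le> y' - y \<and> y' - y \<le> c + t then 1 else 0) \<partial>expM lam) = emeasure (expM lam) {y+c..y+c+t}" for y
  proof -
    have "(\<integral>\<^sup>+ y'. (if c \<le> y' - y \<and> y' - y \<le> c + t then 1 else 0) \<partial>expM lam) = (\<integral>\<^sup>+ y'. indicator {y+c..y+c+t} y' \<partial>expM lam)"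
      by (intro nn_integral_cong) (auto simp: indicator_def)
    also have "\<dots> = emeasure (expM lam) {y+c..y+c+t}" by (intro nn_integral_indicator) simp
    finally show ?thesis .
  qed
  have bound: "ennreal (exponential_density lam y) * emeasure (expM lam) {y+c..y+c+t}
      \<le> ennreal (exponential_density lam y) * ennreal (exp (- lam * y)) * ennreal (1 - exp (- lam * t))" for y
  proof (cases "y < 0")
    case True then show ?thesis by (simp add: exponential_density_def)
  next
    case False
    have "emeasure (expM lam) {y+c..y+c+t} = ennreal (exp (- lam * (y+c)) - exp (- lam * (y+c+t)))"
      using False c t lam by (intro exp_Icc) auto
    also have "\<dots> \<le> ennreal (exp (- lam * y) * (1 - exp (- lam * t)))"
    proof (rule ennreal_leI)
      have "exp (- lam * (y+c)) - exp (- lam * (y+c+t)) = exp (- lam * (y+c)) * (1 - exp (- lam * t))"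
        by (simp add: algebra_simps exp_add[symmetric])
      also have "\<dots> \<le> exp (- lam * y) * (1 - exp (- lam * t))"
        using lam c t by (intro mult_right_mono) (auto simp: mult_nonneg_nonneg)
      finally show "exp (- lam * (y+c)) - exp (- lam * (y+c+t)) \<le> exp (- lam * y) * (1 - exp (- lam * t))" .
    qed
    finally have "emeasure (expM lam) {y+c..y+c+t} \<le> ennreal (exp (- lam * y) * (1 - exp (- lam * t)))" .
    then have "ennreal (exponential_density lam y) * emeasure (expM lam) {y+c..y+c+t}
       \<le> ennreal (exponential_density lam y) * ennreal (exp (- lam * y) * (1 - exp (- lam * t)))"
      by (rule mult_left_mono) simp
    also have "\<dots> = ennreal (exponential_density lam y) * ennreal (exp (- lam * y)) * ennreal (1 - exp (- lam * t))"
      using lam t by (simp add: ennreal_mult mult.assoc)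
    finally show ?thesis .
  qed
  have "(\<integral>\<^sup>+ y. (\<integral>\<^sup>+ y'. (if c \<le> y' - y \<and> y' - y \<le> c + t then 1 else 0) \<partial>expM lam) \<partial>expM lam)
      = (\<integral>\<^sup>+ y. ennreal (exponential_density lam y) * emeasure (expM lam) {y+c..y+c+t} \<partial>lborel)"
    by (subst nn_integral_density[OF _ meas]) (auto simp: inner)
  also have "\<dots> \<le> (\<integral>\<^sup>+ y. ennreal (exponential_density lam y) * ennreal (exp (- lam * y)) * ennreal (1 - exp (- lam * t)) \<partial>lborel)"
    by (intro nn_integral_mono bound)
  also have "\<dots> = (\<integral>\<^sup>+ y. ennreal (exponential_density lam y) * ennreal (exp (- lam * y)) \<partial>lborel) * ennreal (1 - exp (- lam * t))"
    by (rule nn_integral_multc) simp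
  also have "\<dots> = ennreal (1/2) * ennreal (1 - exp (- lam * t))"
    by (simp only: exp_half[OF lam])
  also have "\<dots> = ennreal ((1 - exp (- lam * t)) / 2)"
    by (subst ennreal_mult[symmetric]) (use lam t in auto)
  finally show ?thesis .
qed

lemma exp_half_ineq1: "(1 - exp (-1::real)) / 2 \<le> 1 - exp (-1/2)"
proof -
  define z :: real where "z = exp (-1/2)"
  have e1: "exp (-1::real) = z * z" by (simp add: z_def exp_add[symmetric])
  have "0 \<le> (1 - z)^2" by simp
  then have "0 \<le> 1 - 2*z + z*z" by (simp add: power2_eq_square algebra_simps)
  then show ?thesis unfolding e1 z_def[symmetric] by (simp add: field_simps)
qed
lemma exp_half_ineq2: "(1 - exp (- (s + 1))) / 2 + (1 - exp s) / 2 \<le> 1 - exp (-1/2::real)"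
proof -
  define a where "a = exp ((- s - 1) / 2)"
  define b where "b = exp (s / 2)"
  have e1: "exp (- (s + 1)) = a * a" by (simp add: a_def exp_add[symmetric])
  have e2: "exp s = b * b" by (simp add: b_def exp_add[symmetric])
  have e3: "exp (-1/2) = a * b" by (simp add: a_def b_def exp_add[symmetric] field_simps)
  have "0 \<le> (a - b)^2" by simp
  then have "0 \<le> a*a - 2*(a*b) + b*b" by (simp add: power2_eq_square algebra_simps)
  then show ?thesis unfolding e1 e2 e3 by (simp add: field_simps)
qed

lemma L_main:
  assumes lam: "0 < lam"
  shows "(\<integral>\<^sup>+ y'. (\<integral>\<^sup>+ y. (if c \<le> y' - y \<and> y' - y \<le> c + 1/lam then 1 else 0) \<partial>expM lam) \<partial>expM lam)
         \<le> ennreal (1 - exp (-1/2))"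
proof -
  interpret X: prob_space "expM lam" using lam by (rule prob_space_exponential_density)
  interpret P: pair_sigma_finite "expM lam" "expM lam"
    by (simp add: pair_sigma_finite_def X.sigma_finite_measure_axioms)
  have swap: "(\<integral>\<^sup>+ y'. (\<integral>\<^sup>+ y. (if a \<le> y' - y \<and> y' - y \<le> a + t then 1 else 0) \<partial>expM lam) \<partial>expM lam)
    = (\<integral>\<^sup>+ y. (\<integral>\<^sup>+ y'. (if a \<le> y' - y \<and> y' - y \<le> a + t then 1 else 0) \<partial>expM lam) \<partial>expM lam)" for a t
    by (rule P.Fubini'[where f="\<lambda>y y'. (if a \<le> y' - y \<and> y' - y \<le> a + t then 1 else 0)"]) measurable
  have lh: "lam * (1/lam) = 1" using lam by simp
  consider "0 \<le> c" | "c + 1/lam \<le> 0" | "c < 0" "0 < c + 1/lam" by linarith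
  then show ?thesis
  proof cases
    case 1
    have "(\<integral>\<^sup>+ y'. (\<integral>\<^sup>+ y. (if c \<le> y' - y \<and> y' - y \<le> c + 1/lam then 1 else 0) \<partial>expM lam) \<partial>expM lam)
       \<le> ennreal ((1 - exp (- lam * (1/lam))) / 2)"
      unfolding swap using lam 1 by (intro L_core) auto
    also have "\<dots> \<le> ennreal (1 - exp (-1/2))"
      using exp_half_ineq1 lh by (intro ennreal_leI) simp
    finally show ?thesis .
  next
    case 2
    define c' where "c' = - c - 1/lam"
    have "(\<integral>\<^sup>+ y'. (\<integral>\<^sup>+ y. (if c \<le> y' - y \<and> y' - y \<le> c + 1/lam then 1 else 0) \<partial>expM lam) \<partial>expM lam)
       = (\<integral>\<^sup>+ y'. (\<integral>\<^sup>+ y. (if c' \<le> y - y' \<and> y - y' \<le> c' + 1/lam then 1 else 0) \<partial>expM lam) \<partial>expM lam)"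
      by (intro nn_integral_cong) (auto simp: c'_def)
    also have "\<dots> \<le> ennreal ((1 - exp (- lam * (1/lam))) / 2)"
      using lam 2 by (intro L_core) (auto simp: c'_def)
    also have "\<dots> \<le> ennreal (1 - exp (-1/2))"
      using exp_half_ineq1 lh by (intro ennreal_leI) simp
    finally show ?thesis .
  next
    case 3
    have "0 < (c + 1/lam) * lam" using 3 lam by simp
    then have cl1: "-1 < lam * c" using lh by (simp add: algebra_simps)
    have cl2: "lam * c < 0" using 3 lam by (simp add: mult_pos_neg)
    have e1: "exp (- lam * (c + 1/lam)) = exp (- (lam * c + 1))" using lh by (simp add: algebra_simps)
    have e2: "exp (- lam * (- c)) = exp (lam * c)" by simp
    have n1: "0 \<le> (1 - exp (- (lam * c + 1))) / 2" using cl1 by simp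
    have n2: "0 \<le> (1 - exp (lam * c)) / 2" using cl2 by simp
    let ?A = "\<lambda>y' y. (if 0 \<le> y' - y \<and> y' - y \<le> 0 + (c + 1/lam) then 1 else 0) :: ennreal"
    let ?B = "\<lambda>y' y. (if 0 \<le> y - y' \<and> y - y' \<le> 0 + (- c) then 1 else 0) :: ennreal"
    have "(\<integral>\<^sup>+ y'. (\<integral>\<^sup>+ y. (if c \<le> y' - y \<and> y' - y \<le> c + 1/lam then 1 else 0) \<partial>expM lam) \<partial>expM lam)
       \<le> (\<integral>\<^sup>+ y'. (\<integral>\<^sup>+ y. ?A y' y + ?B y' y \<partial>expM lam) \<partial>expM lam)"
      by (intro nn_integral_mono) auto
    also have "\<dots> = (\<integral>\<^sup>+ y'. (\<integral>\<^sup>+ y. ?A y' y \<partial>expM lam) + (\<integral>\<^sup>+ y. ?B y' y \<partial>expM lam) \<partial>expM lam)"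
      by (intro nn_integral_cong nn_integral_add) auto
    also have "\<dots> = (\<integral>\<^sup>+ y'. (\<integral>\<^sup>+ y. ?A y' y \<partial>expM lam) \<partial>expM lam) + (\<integral>\<^sup>+ y'. (\<integral>\<^sup>+ y. ?B y' y \<partial>expM lam) \<partial>expM lam)"
      by (intro nn_integral_add) measurable
    also have "\<dots> \<le> ennreal ((1 - exp (- lam * (c + 1/lam))) / 2) + ennreal ((1 - exp (- lam * (- c))) / 2)"
    proof (intro add_mono)
      show "(\<integral>\<^sup>+ y'. (\<integral>\<^sup>+ y. ?A y' y \<partial>expM lam) \<partial>expM lam) \<le> ennreal ((1 - exp (- lam * (c + 1/lam))) / 2)"
        unfolding swap using lam 3 by (intro L_core) auto
      show "(\<integral>\<^sup>+ y'. (\<integral>\<^sup>+ y. ?B y' y \<partial>expM lam) \<partial>expM lam) \<le> ennreal ((1 - exp (- lam * (- c))) / 2)"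
        using lam 3 by (intro L_core) auto
    qed
    also have "ennreal ((1 - exp (- lam * (c + 1/lam))) / 2) + ennreal ((1 - exp (- lam * (- c))) / 2)
       = ennreal ((1 - exp (- (lam * c + 1))) / 2 + (1 - exp (lam * c)) / 2)"
      unfolding e1 e2 using n1 n2 by (rule ennreal_plus[symmetric])
    also have "\<dots> \<le> ennreal (1 - exp (-1/2))"
      by (intro ennreal_leI exp_half_ineq2)
    finally show ?thesis .
  qed
qed



lemma comp_meas:
  assumes "i \<in> I" shows "(\<lambda>x. x i) \<in> borel_measurable (PiM I (\<lambda>_. expM lam))"
proof -
  have "measurable (PiM I (\<lambda>_. expM lam)) (expM lam) = measurable (PiM I (\<lambda>_. expM lam)) borel"
    by (rule measurable_cong_sets) simp_all
  then show ?thesis using measurable_component_singleton[OF assms, of "\<lambda>_. expM lam"] by simp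
qed

lemma pred_between:
  fixes f g :: "'x \<Rightarrow> real"
  assumes [measurable]: "f \<in> borel_measurable M" "g \<in> borel_measurable M"
  shows "{x\<in>space M. g x \<le> f x \<and> f x \<le> g x + h} \<in> sets M"
  by measurable

lemma set2_meas:
  fixes E :: "'e set" and g :: "('e \<Rightarrow> real) \<Rightarrow> real"
  assumes ab: "a \<in> E" "b \<in> E"
  and g: "g \<in> borel_measurable (PiM E (\<lambda>_. borel))"
  shows "{x\<in>space (PiM E (\<lambda>_. borel)). g x \<le> x b - x a \<and> x b - x a \<le> g x + h} \<in> sets (PiM E (\<lambda>_. borel))"
proof -
  have "(\<lambda>x::'e \<Rightarrow> real. x b - x a) \<in> borel_measurable (PiM E (\<lambda>_. borel))"
    using borel_measurable_diff[OF measurable_component_singleton[OF ab(2), where M="\<lambda>_. borel :: real measure"]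
       measurable_component_singleton[OF ab(1), where M="\<lambda>_. borel :: real measure"]]
    by simp
  then show ?thesis using pred_between[OF _ g] by blast
qed

lemma interior_bound:
  fixes E :: "'e set" and a b :: 'e and g :: "('e \<Rightarrow> real) \<Rightarrow> real"
  assumes lam: "0 < lam" and fin: "finite E" and ab: "a \<in> E" "b \<in> E" "a \<noteq> b"
    and g[measurable]: "g \<in> borel_measurable (PiM E (\<lambda>_. expM lam))"
    and gind: "\<And>w w'. (\<And>e. e \<noteq> a \<Longrightarrow> e \<noteq> b \<Longrightarrow> w e = w' e) \<Longrightarrow> g w = g w'"
  shows "emeasure (PiM E (\<lambda>_. expM lam)) {w \<in> space (PiM E (\<lambda>_. expM lam)). g w \<le> w b - w a \<and> w b - w a \<le> g w + 1/lam}
         \<le> ennreal (1 - exp (-1/2))"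
proof -
  let ?M = "\<lambda>_::'e. expM lam"
  interpret X: prob_space "expM lam" using lam by (rule prob_space_exponential_density)
  interpret PS: product_prob_space ?M E
    by unfold_locales
  define I where "I = E - {a,b}"
  define J where "J = {a,b}"
  have IJ: "I \<inter> J = {}" "I \<union> J = E" "finite I" "finite J"
    using ab fin by (auto simp: I_def J_def)
  interpret FI: finite_product_sigma_finite ?M I by unfold_locales (rule IJ)
  interpret FJ: finite_product_sigma_finite ?M J by unfold_locales (rule IJ)
  interpret FIp: prob_space "PiM I ?M" by (rule prob_space_PiM) (rule X.prob_space_axioms)
  define F where "F = {w \<in> space (PiM E ?M). g w \<le> w b - w a \<and> w b - w a \<le> g w + 1/lam}"
  have [measurable]: "(\<lambda>x. x a) \<in> borel_measurable (PiM E ?M)" "(\<lambda>x. x b) \<in> borel_measurable (PiM E ?M)"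
    using ab by (auto intro: comp_meas)
  have [measurable]: "(\<lambda>x. x a) \<in> borel_measurable (PiM E (\<lambda>_. borel))" "(\<lambda>x. x b) \<in> borel_measurable (PiM E (\<lambda>_. borel))"
    using ab by (auto intro!: measurable_component_singleton)
  have sPi: "sets (PiM E ?M) = sets (PiM E (\<lambda>_. borel))" by (rule sets_PiM_cong) simp_all
  have g'[measurable]: "g \<in> borel_measurable (PiM E (\<lambda>_. borel))"
    using g by (simp add: measurable_cong_sets[OF sPi refl])
  have spPi: "space (PiM E ?M) = space (PiM E (\<lambda>_. borel))" by (simp add: space_PiM)
  have "{w \<in> space (PiM E (\<lambda>_. borel)). g w \<le> w b - w a \<and> w b - w a \<le> g w + 1/lam} \<in> sets (PiM E (\<lambda>_. borel))"
    using set2_meas[OF ab(1,2) g'] .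
  then have Fm[measurable]: "F \<in> sets (PiM E ?M)" unfolding F_def spPi sPi .
  have mm: "merge I J \<in> measurable (PiM I ?M \<Otimes>\<^sub>M PiM J ?M) (PiM E ?M)"
    using measurable_merge[of I J ?M] IJ(2) by simp
  have "emeasure (PiM E ?M) F = emeasure (distr (PiM I ?M \<Otimes>\<^sub>M PiM J ?M) (PiM E ?M) (merge I J)) F"
    using PS.distr_merge[OF IJ(1) IJ(3) IJ(4)] IJ(2) by simp
  also have "\<dots> = emeasure (PiM I ?M \<Otimes>\<^sub>M PiM J ?M) (merge I J -` F \<inter> space (PiM I ?M \<Otimes>\<^sub>M PiM J ?M))"
    by (rule emeasure_distr[OF mm Fm])
  also have "\<dots> = (\<integral>\<^sup>+ z. emeasure (PiM J ?M) (Pair z -` (merge I J -` F \<inter> space (PiM I ?M \<Otimes>\<^sub>M PiM J ?M))) \<partial>PiM I ?M)"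
    by (rule FJ.emeasure_pair_measure_alt) (rule measurable_sets[OF mm Fm])
  also have "\<dots> \<le> (\<integral>\<^sup>+ z. ennreal (1 - exp (-1/2)) \<partial>PiM I ?M)"
  proof (rule nn_integral_mono)
    fix z assume z: "z \<in> space (PiM I ?M)"
    define c where "c = g (merge I J (z, \<lambda>_. 0))"
    have gc: "g (merge I J (z, x)) = c" for x
      unfolding c_def by (rule gind) (auto simp: merge_def J_def)
    have slice: "Pair z -` (merge I J -` F \<inter> space (PiM I ?M \<Otimes>\<^sub>M PiM J ?M))
        = {x \<in> space (PiM J ?M). c \<le> x b - x a \<and> x b - x a \<le> c + 1/lam}"
    proof -
      have "merge I J (z, x) \<in> space (PiM E ?M)" if "x \<in> space (PiM J ?M)" for x
        using measurable_space[OF mm, of "(z,x)"] z that by (simp add: space_pair_measure)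
      moreover have "merge I J (z, x) a = x a" "merge I J (z, x) b = x b" for x
        using IJ(1) by (auto simp: merge_def J_def)
      ultimately show ?thesis using z gc
        by (auto simp: F_def space_pair_measure)
    qed
    have Sm: "{x \<in> space (PiM J ?M). c \<le> x b - x a \<and> x b - x a \<le> c + 1/lam} \<in> sets (PiM J ?M)"
    proof -
      have [measurable]: "(\<lambda>x. x a) \<in> borel_measurable (PiM J ?M)" "(\<lambda>x. x b) \<in> borel_measurable (PiM J ?M)"
        by (auto intro: comp_meas simp: J_def)
      show ?thesis by measurable
    qed
    have "emeasure (PiM J ?M) {x \<in> space (PiM J ?M). c \<le> x b - x a \<and> x b - x a \<le> c + 1/lam}
        = (\<integral>\<^sup>+ x. (if c \<le> x b - x a \<and> x b - x a \<le> c + 1/lam then 1 else 0) \<partial>PiM J ?M)"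
      by (subst nn_integral_indicator[OF Sm, symmetric]) (auto intro!: nn_integral_cong simp: indicator_def)
    also have "\<dots> = (\<integral>\<^sup>+ x. (\<integral>\<^sup>+ y. (if c \<le> (x(a := y)) b - (x(a := y)) a \<and> (x(a := y)) b - (x(a := y)) a \<le> c + 1/lam then 1 else 0) \<partial>expM lam) \<partial>PiM {b} ?M)"
    proof -
      have Jeq: "J = insert a {b}" by (simp add: J_def)
      have [measurable]: "(\<lambda>x. x a) \<in> borel_measurable (PiM (insert a {b}) ?M)" "(\<lambda>x. x b) \<in> borel_measurable (PiM (insert a {b}) ?M)"
        by (auto intro: comp_meas)
      moreover have "(\<lambda>x. (if c \<le> x b - x a \<and> x b - x a \<le> c + 1/lam then 1 else 0) :: ennreal) \<in> borel_measurable (PiM (insert a {b}) ?M)"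
        by measurable
      ultimately show ?thesis
        using PS.product_nn_integral_insert[of "{b}" a] ab(3) Jeq by simp
    qed
    also have "\<dots> = (\<integral>\<^sup>+ x. (\<lambda>y'. \<integral>\<^sup>+ y. (if c \<le> y' - y \<and> y' - y \<le> c + 1/lam then 1 else 0) \<partial>expM lam) (x b) \<partial>PiM {b} ?M)"
      using ab(3) by simp
    also have "\<dots> = (\<integral>\<^sup>+ y'. (\<integral>\<^sup>+ y. (if c \<le> y' - y \<and> y' - y \<le> c + 1/lam then 1 else 0) \<partial>expM lam) \<partial>expM lam)"
      by (rule PS.product_nn_integral_singleton) measurable
    also have "\<dots> \<le> ennreal (1 - exp (-1/2))" by (rule L_main[OF lam])
    finally show "emeasure (PiM J ?M) (Pair z -` (merge I J -` F \<inter> space (PiM I ?M \<Otimes>\<^sub>M PiM J ?M))) \<le> ennreal (1 - exp (-1/2))"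
      unfolding slice .
  qed
  also have "\<dots> = ennreal (1 - exp (-1/2))"
    by (simp add: FIp.emeasure_space_1)
  finally show ?thesis unfolding F_def .
qed



definition diffF :: "(nat \<Rightarrow> 'e) \<Rightarrow> nat \<Rightarrow> nat \<Rightarrow> ('e \<Rightarrow> real) \<Rightarrow> real" where
  "diffF e K j w = (\<Sum>r\<in>{j..<K}. w (e r)) - (\<Sum>r<j. w (e r))"

definition Bset :: "real \<Rightarrow> 'e set \<Rightarrow> (nat \<Rightarrow> 'e) \<Rightarrow> nat \<Rightarrow> nat \<Rightarrow> bool \<Rightarrow> ('e \<Rightarrow> real) set" where
  "Bset lam E e K j up = {w \<in> space (PiM E (\<lambda>_. expM lam)). (\<forall>r<K. 0 < w (e r)) \<and>
     (if up then 0 \<le> diffF e K j w \<and> diffF e K j w \<le> 1/lam else -(1/lam) \<le> diffF e K j w \<and> diffF e K j w \<le> 0)}"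

definition pbound :: real where "pbound = max (1 - exp (-1/2)) ((1 - exp (-1))^2)"

lemma pos_set_meas:
  fixes f :: "nat \<Rightarrow> 'x \<Rightarrow> real"
  assumes "\<And>r. r \<in> {..<K} \<Longrightarrow> f r \<in> borel_measurable M"
  shows "{x\<in>space M. \<forall>r\<in>{..<K}. 0 < f r x} \<in> sets M"
proof -
  have "{x\<in>space M. \<forall>r\<in>{..<K}. 0 < f r x} = space M \<inter> (\<Inter>r\<in>{..<K}. {x\<in>space M. 0 < f r x})" by auto
  also have "\<dots> \<in> sets M"
  proof (cases "K = 0")
    case True then show ?thesis by simp
  next
    case False then show ?thesis using assms by (intro sets.Int sets.finite_INT) auto
  qed
  finally show ?thesis .
qed

lemma sum_comp_meas:
  fixes e :: "nat \<Rightarrow> 'e"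
  assumes "\<And>r. r \<in> S \<Longrightarrow> e r \<in> E"
  shows "(\<lambda>w::'e\<Rightarrow>real. \<Sum>r\<in>S. w (e r)) \<in> borel_measurable (PiM E (\<lambda>_. expM lam))"
  using assms by (intro borel_measurable_sum comp_meas) auto

lemma diffF_meas:
  fixes e :: "nat \<Rightarrow> 'e"
  assumes "\<And>r. r < K \<Longrightarrow> e r \<in> E" "j \<le> K"
  shows "diffF e K j \<in> borel_measurable (PiM E (\<lambda>_. expM lam))"
proof -
  have m1: "(\<lambda>w::'e\<Rightarrow>real. \<Sum>r\<in>{j..<K}. w (e r)) \<in> borel_measurable (PiM E (\<lambda>_. expM lam))"
    using assms by (intro sum_comp_meas) auto
  have m2: "(\<lambda>w::'e\<Rightarrow>real. \<Sum>r\<in>{..<j}. w (e r)) \<in> borel_measurable (PiM E (\<lambda>_. expM lam))"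
    using assms by (intro sum_comp_meas) auto 
  show ?thesis unfolding diffF_def[abs_def] using borel_measurable_diff[OF m1 m2] by simp
qed

lemma interval_set_meas:
  fixes f :: "'x \<Rightarrow> real"
  assumes [measurable]: "f \<in> borel_measurable M"
  shows "{x\<in>space M. lo \<le> f x \<and> f x \<le> hi} \<in> sets M"
  by measurable

lemma Bset_sets:
  fixes e :: "nat \<Rightarrow> 'e"
  assumes eE: "\<And>r. r < K \<Longrightarrow> e r \<in> E" and j: "j \<le> K"
  shows "Bset lam E e K j up \<in> sets (PiM E (\<lambda>_. expM lam))"
proof -
  let ?M = "PiM E (\<lambda>_. expM lam)"
  have pos: "{w\<in>space ?M. \<forall>r\<in>{..<K}. 0 < w (e r)} \<in> sets ?M"
    using eE by (intro pos_set_meas comp_meas) auto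
  have dm: "diffF e K j \<in> borel_measurable ?M" using eE j by (rule diffF_meas)
  have up: "{w\<in>space ?M. 0 \<le> diffF e K j w \<and> diffF e K j w \<le> 1/lam} \<in> sets ?M"
    by (rule interval_set_meas[OF dm])
  have dn: "{w\<in>space ?M. -(1/lam) \<le> diffF e K j w \<and> diffF e K j w \<le> 0} \<in> sets ?M"
    by (rule interval_set_meas[OF dm])
  show ?thesis
  proof (cases up)
    case True
    have "Bset lam E e K j up = {w\<in>space ?M. \<forall>r\<in>{..<K}. 0 < w (e r)} \<inter> {w\<in>space ?M. 0 \<le> diffF e K j w \<and> diffF e K j w \<le> 1/lam}"
      using True by (auto simp: Bset_def)
    then show ?thesis using pos up by auto
  next
    case False
    have "Bset lam E e K j up = {w\<in>space ?M. \<forall>r\<in>{..<K}. 0 < w (e r)} \<inter> {w\<in>space ?M. -(1/lam) \<le> diffF e K j w \<and> diffF e K j w \<le> 0}"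
      using False by (auto simp: Bset_def)
    then show ?thesis using pos dn by auto
  qed
qed

lemma end_bound:
  fixes E :: "'e set"
  assumes lam: "0 < lam" and ab: "a \<in> E" "b \<in> E" "a \<noteq> b"
  shows "emeasure (PiM E (\<lambda>_. expM lam)) {w \<in> space (PiM E (\<lambda>_. expM lam)). w a \<le> 1/lam \<and> w b \<le> 1/lam}
     = ennreal ((1 - exp (-1))^2)"
proof -
  let ?M = "\<lambda>_::'e. expM lam"
  interpret X: prob_space "expM lam" using lam by (rule prob_space_exponential_density)
  interpret PS: product_prob_space ?M E by unfold_locales
  have "{w \<in> space (PiM E ?M). w a \<le> 1/lam \<and> w b \<le> 1/lam} = {w \<in> space (PiM E ?M). \<forall>i\<in>{a,b}. w i \<in> {..1/lam}}"
    by auto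
  also have "emeasure (PiM E ?M) \<dots> = (\<Prod>i\<in>{a,b}. emeasure (expM lam) {..1/lam})"
    using ab by (intro PS.emeasure_PiM_Collect) auto
  also have "\<dots> = ennreal (1 - exp (- lam * (1/lam))) * ennreal (1 - exp (- lam * (1/lam)))"
    using ab lam by (simp add: exp_atMost)
  also have "\<dots> = ennreal ((1 - exp (-1))^2)"
    using lam by (simp add: ennreal_mult[symmetric] power2_eq_square)
  finally show ?thesis .
qed

lemma pbound_ge1: "1 - exp (-1/2) \<le> pbound" by (simp add: pbound_def)
lemma pbound_ge2: "(1 - exp (-1))^2 \<le> pbound" by (simp add: pbound_def)

lemma Bset_bound:
  fixes e :: "nat \<Rightarrow> 'e" and E :: "'e set"
  assumes lam: "0 < lam" and fin: "finite E" and eE: "\<And>r. r < K \<Longrightarrow> e r \<in> E"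
    and inj: "inj_on e {..<K}" and K2: "2 \<le> K" and j: "j \<le> K"
  shows "emeasure (PiM E (\<lambda>_. expM lam)) (Bset lam E e K j up) \<le> ennreal pbound"
proof -
  let ?M = "PiM E (\<lambda>_. expM lam)"
  have ne01: "e 0 \<noteq> e 1"
  proof
    assume "e 0 = e 1"
    then have "(0::nat) = 1" using K2 by (intro inj_onD[OF inj]) auto
    then show False by simp
  qed
  have e01: "e 0 \<in> E" "e 1 \<in> E" "e 0 \<noteq> e 1" using eE K2 ne01 by auto
  show ?thesis
  proof (cases "j = 0 \<or> j = K")
    case True
    have sub: "Bset lam E e K j up \<subseteq> {w \<in> space ?M. w (e 0) \<le> 1/lam \<and> w (e 1) \<le> 1/lam}"
    proof
      fix w assume w: "w \<in> Bset lam E e K j up"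
      then have ws: "w \<in> space ?M" and pos: "\<And>r. r < K \<Longrightarrow> 0 < w (e r)" by (auto simp: Bset_def)
      define S where "S = (\<Sum>r<K. w (e r))"
      have le: "w (e r) \<le> S" if "r < K" for r
        unfolding S_def using that pos by (intro member_le_sum) (auto intro: less_imp_le)
      have Spos: "0 < S" using le[of 0] pos[of 0] K2 by simp
      have "S \<le> 1/lam"
      proof (cases "j = 0")
        case True
        then have "diffF e K j w = S" by (simp add: diffF_def S_def atLeast0LessThan)
        then show ?thesis using w Spos by (auto simp: Bset_def split: if_splits)
      next
        case False
        then have "j = K" using \<open>j = 0 \<or> j = K\<close> by simp
        then have "diffF e K j w = - S" by (simp add: diffF_def S_def)
        then show ?thesis using w Spos by (auto simp: Bset_def split: if_splits)
      qed
      then show "w \<in> {w \<in> space ?M. w (e 0) \<le> 1/lam \<and> w (e 1) \<le> 1/lam}"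
        using ws le[of 0] le[of 1] K2 by auto
    qed
    have "emeasure ?M (Bset lam E e K j up) \<le> emeasure ?M {w \<in> space ?M. w (e 0) \<le> 1/lam \<and> w (e 1) \<le> 1/lam}"
    proof (rule emeasure_mono[OF sub])
      have [measurable]: "(\<lambda>w. w (e 0)) \<in> borel_measurable ?M" "(\<lambda>w. w (e 1)) \<in> borel_measurable ?M"
        using e01 by (auto intro: comp_meas)
      show "{w \<in> space ?M. w (e 0) \<le> 1/lam \<and> w (e 1) \<le> 1/lam} \<in> sets ?M" by measurable
    qed
    also have "\<dots> = ennreal ((1 - exp (-1))^2)" using end_bound[OF lam e01] .
    also have "\<dots> \<le> ennreal pbound" by (intro ennreal_leI pbound_ge2)
    finally show ?thesis .
  next
    case False
    then have j1: "1 \<le> j" "j < K" using j by auto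
    define a where "a = e (j - 1)"
    define b where "b = e j"
    have "a \<noteq> b"
    proof
      assume "a = b"
      then have "j - 1 = j" using j1 unfolding a_def b_def by (intro inj_onD[OF inj]) auto
      then show False using j1 by simp
    qed
    then have abE: "a \<in> E" "b \<in> E" "a \<noteq> b" using eE j1 by (auto simp: a_def b_def)
    define R where "R = (\<lambda>w::'e \<Rightarrow> real. (\<Sum>r\<in>{Suc j..<K}. w (e r)) - (\<Sum>r<j - 1. w (e r)))"
    have dR: "diffF e K j w = w b - w a + R w" for w
    proof -
      have "(\<Sum>r\<in>{j..<K}. w (e r)) = w (e j) + (\<Sum>r\<in>{Suc j..<K}. w (e r))"
        using j1 by (simp add: sum.atLeast_Suc_lessThan)
      moreover have "(\<Sum>r<j. w (e r)) = (\<Sum>r<j - 1. w (e r)) + w (e (j - 1))"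
        using j1 lessThan_Suc[of "j - 1"] by simp
      ultimately show ?thesis by (simp add: diffF_def R_def a_def b_def)
    qed
    define g where "g = (\<lambda>w. if up then - R w else - R w - 1/lam)"
    have Rm: "R \<in> borel_measurable ?M"
    proof -
      have m1: "(\<lambda>w::'e\<Rightarrow>real. \<Sum>r\<in>{Suc j..<K}. w (e r)) \<in> borel_measurable ?M"
        using eE by (intro sum_comp_meas) auto
      have m2: "(\<lambda>w::'e\<Rightarrow>real. \<Sum>r\<in>{..<j - 1}. w (e r)) \<in> borel_measurable ?M"
        using eE j1 by (intro sum_comp_meas) auto
      show ?thesis unfolding R_def using borel_measurable_diff[OF m1 m2] by simp
    qed
    have gm: "g \<in> borel_measurable ?M"
      unfolding g_def using Rm by (cases up) auto
    have gind: "g w = g w'" if agree: "\<And>x. x \<noteq> a \<Longrightarrow> x \<noteq> b \<Longrightarrow> w x = w' x" for w w'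
    proof -
      have "w (e r) = w' (e r)" if "r < K" "r \<noteq> j - 1" "r \<noteq> j" for r
        using agree that inj j1 unfolding a_def b_def inj_on_def by (metis lessThan_iff less_imp_diff_less)
      then have "R w = R w'" unfolding R_def using j1
        by (intro arg_cong2[where f="(-)"] sum.cong) auto
      then show ?thesis by (simp add: g_def)
    qed
    have sub: "Bset lam E e K j up \<subseteq> {w \<in> space ?M. g w \<le> w b - w a \<and> w b - w a \<le> g w + 1/lam}"
    proof
      fix w assume w: "w \<in> Bset lam E e K j up"
      have ws: "w \<in> space ?M"
        and c: "if up then 0 \<le> diffF e K j w \<and> diffF e K j w \<le> 1/lam else -(1/lam) \<le> diffF e K j w \<and> diffF e K j w \<le> 0"
        using w unfolding Bset_def by blast+
      have d: "diffF e K j w = w b - w a + R w" by (rule dR)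
      show "w \<in> {w \<in> space ?M. g w \<le> w b - w a \<and> w b - w a \<le> g w + 1/lam}"
      proof (cases up)
        case True
        then have "0 \<le> diffF e K j w" "diffF e K j w \<le> 1/lam" using c by simp_all
        moreover have "g w = - R w" using True by (simp add: g_def)
        ultimately show ?thesis using ws d by simp
      next
        case False
        then have "-(1/lam) \<le> diffF e K j w" "diffF e K j w \<le> 0" using c by simp_all
        moreover have "g w = - R w - 1/lam" using False by (simp add: g_def)
        ultimately show ?thesis using ws d by simp
      qed
    qed
    have "emeasure ?M (Bset lam E e K j up) \<le> emeasure ?M {w \<in> space ?M. g w \<le> w b - w a \<and> w b - w a \<le> g w + 1/lam}"
    proof (rule emeasure_mono[OF sub])
      have "(\<lambda>x::'e \<Rightarrow> real. x b - x a) \<in> borel_measurable ?M"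
        using abE by (intro borel_measurable_diff comp_meas)
      then show "{w \<in> space ?M. g w \<le> w b - w a \<and> w b - w a \<le> g w + 1/lam} \<in> sets ?M"
        using pred_between[OF _ gm] by blast
    qed
    also have "\<dots> \<le> ennreal (1 - exp (-1/2))"
      by (rule interior_bound[OF lam fin abE gm gind])
    also have "\<dots> \<le> ennreal pbound" by (intro ennreal_leI pbound_ge1)
    finally show ?thesis .
  qed
qed



lemma sum_indicator_real_card: "(\<Sum>i<(l::nat). indicator S i :: real) = real (card ({..<l} \<inter> S))"
proof -
  have "(\<Sum>i<l. indicator S i :: real) = real (\<Sum>i<l. indicator S i :: nat)"
    by (simp add: of_nat_sum indicator_def)
  also have "\<dots> = real (card ({..<l} \<inter> S))" by (subst sum_indicator_eq_card) simp_all
  finally show ?thesis .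
qed

lemma chernoff:
  fixes M1 :: "'b measure" and B :: "nat \<Rightarrow> 'b set" and p :: real
  assumes M1: "prob_space M1" and Bs: "\<And>i. i < l \<Longrightarrow> B i \<in> sets M1"
    and Bp: "\<And>i. i < l \<Longrightarrow> emeasure M1 (B i) \<le> ennreal p"
    and p: "0 < p" "p \<le> 1/2"
  defines "\<theta> \<equiv> (1 - p) / p"
  shows "emeasure (PiM {..<l} (\<lambda>_. M1)) {\<omega> \<in> space (PiM {..<l} (\<lambda>_. M1)). l \<le> 2 * card {i. i < l \<and> \<omega> i \<in> B i}}
         \<le> ennreal (((1 + (\<theta> - 1) * p) / sqrt \<theta>) ^ l)"
proof -
  interpret M1: prob_space M1 by (rule M1)
  interpret PS: product_prob_space "\<lambda>_::nat. M1" "{..<l}" by unfold_locales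
  let ?P = "PiM {..<l} (\<lambda>_. M1)"
  have th1: "1 \<le> \<theta>" using p by (simp add: \<theta>_def field_simps)
  define s where "s = sqrt \<theta>"
  have s1: "1 \<le> s" using th1 by (simp add: s_def)
  have ss: "s * s = \<theta>" using th1 by (simp add: s_def)
  define f where "f = (\<lambda>i x. if x \<in> B i then \<theta> else 1)"
  define S where "S = {\<omega> \<in> space ?P. l \<le> 2 * card {i. i < l \<and> \<omega> i \<in> B i}}"
  have prodf: "(\<Prod>i<l. f i (\<omega> i)) = \<theta> ^ card {i. i < l \<and> \<omega> i \<in> B i}" for \<omega>
  proof -
    have "(\<Prod>i<l. f i (\<omega> i)) = (\<Prod>i\<in>{i \<in> {..<l}. \<omega> i \<in> B i}. \<theta>)"
      unfolding f_def by (rule prod.inter_filter[symmetric]) simp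
    also have "{i \<in> {..<l}. \<omega> i \<in> B i} = {i. i < l \<and> \<omega> i \<in> B i}" by auto
    finally show ?thesis by simp
  qed
  have ptw: "indicator S \<omega> \<le> ennreal ((\<Prod>i<l. f i (\<omega> i)) / s ^ l)" for \<omega>
  proof (cases "\<omega> \<in> S")
    case True
    then have c: "l \<le> 2 * card {i. i < l \<and> \<omega> i \<in> B i}" by (simp add: S_def)
    have "s ^ l \<le> s ^ (2 * card {i. i < l \<and> \<omega> i \<in> B i})"
      using s1 c by (intro power_increasing) auto
    also have "\<dots> = \<theta> ^ card {i. i < l \<and> \<omega> i \<in> B i}" by (simp add: power_mult ss[symmetric] power2_eq_square)
    finally have "1 \<le> (\<Prod>i<l. f i (\<omega> i)) / s ^ l" using s1 by (simp add: prodf)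
    then show ?thesis using True by simp
  next
    case False then show ?thesis by simp
  qed
  have fnn: "0 \<le> f i x" for i x using th1 by (simp add: f_def)
  have fm: "(\<lambda>x. ennreal (f i x)) \<in> borel_measurable M1" if "i < l" for i
  proof -
    have [measurable]: "B i \<in> sets M1" using Bs that .
    show ?thesis unfolding f_def by measurable
  qed
  have cnt: "real (card {i. i < l \<and> \<omega> i \<in> B i}) = (\<Sum>i<l. indicator (B i) (\<omega> i))" for \<omega>
  proof -
    have "(\<Sum>i<l. indicator (B i) (\<omega> i) :: real) = (\<Sum>i<l. indicator {i. \<omega> i \<in> B i} i)"
      by (simp add: indicator_def)
    also have "\<dots> = real (card ({..<l} \<inter> {i. \<omega> i \<in> B i}))" by (rule sum_indicator_real_card)
    also have "{..<l} \<inter> {i. \<omega> i \<in> B i} = {i. i < l \<and> \<omega> i \<in> B i}" by auto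
    finally show ?thesis by simp
  qed
  have cm: "(\<lambda>\<omega>. \<Sum>i<l. indicator (B i) (\<omega> i) :: real) \<in> borel_measurable ?P"
  proof (rule borel_measurable_sum)
    fix i assume i: "i \<in> {..<l}"
    have c: "(\<lambda>\<omega>. \<omega> i) \<in> measurable ?P M1" using i by (intro measurable_component_singleton) simp
    have d: "(indicator (B i) :: 'b \<Rightarrow> real) \<in> borel_measurable M1" using i Bs by (intro borel_measurable_indicator) auto
    show "(\<lambda>\<omega>. indicator (B i) (\<omega> i) :: real) \<in> borel_measurable ?P"
      using measurable_compose[OF c d] .
  qed
  have Sm: "S \<in> sets ?P"
  proof -
    have "S = {\<omega> \<in> space ?P. real l \<le> 2 * (\<Sum>i<l. indicator (B i) (\<omega> i))}"
      unfolding S_def cnt[symmetric] by (intro Collect_cong conj_cong refl) (metis of_nat_le_iff of_nat_mult of_nat_numeral)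
    also have "\<dots> \<in> sets ?P" using cm by measurable
    finally show ?thesis .
  qed
  have pm: "(\<lambda>\<omega>. \<Prod>i<l. ennreal (f i (\<omega> i))) \<in> borel_measurable ?P"
  proof (rule borel_measurable_prod_ennreal)
    fix i assume i: "i \<in> {..<l}"
    have c: "(\<lambda>\<omega>. \<omega> i) \<in> measurable ?P M1" using i by (intro measurable_component_singleton) simp
    show "(\<lambda>\<omega>. ennreal (f i (\<omega> i))) \<in> borel_measurable ?P"
      using measurable_compose[OF c fm] i by auto
  qed
  have int1: "(\<integral>\<^sup>+ x. ennreal (f i x) \<partial>M1) \<le> ennreal (1 + (\<theta> - 1) * p)" if i: "i < l" for i
  proof -
    have "(\<integral>\<^sup>+ x. ennreal (f i x) \<partial>M1) = (\<integral>\<^sup>+ x. 1 + ennreal (\<theta> - 1) * indicator (B i) x \<partial>M1)"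
    proof (intro nn_integral_cong)
      fix x
      have "ennreal \<theta> = 1 + ennreal (\<theta> - 1)" using ennreal_plus[of 1 "\<theta> - 1"] th1 by simp
      then show "ennreal (f i x) = 1 + ennreal (\<theta> - 1) * indicator (B i) x"
        by (simp add: f_def indicator_def)
    qed
    also have "\<dots> = (\<integral>\<^sup>+ x. 1 \<partial>M1) + (\<integral>\<^sup>+ x. ennreal (\<theta> - 1) * indicator (B i) x \<partial>M1)"
      using Bs[OF i] by (intro nn_integral_add) auto
    also have "\<dots> = 1 + ennreal (\<theta> - 1) * emeasure M1 (B i)"
      using Bs[OF i] by (simp add: nn_integral_cmult_indicator M1.emeasure_space_1)
    also have "\<dots> \<le> 1 + ennreal (\<theta> - 1) * ennreal p"
      using Bp[OF i] by (intro add_mono mult_left_mono) auto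
    also have "\<dots> = ennreal (1 + (\<theta> - 1) * p)"
    proof -
      have n: "0 \<le> (\<theta> - 1) * p" using th1 p by simp
      have "ennreal (\<theta> - 1) * ennreal p = ennreal ((\<theta> - 1) * p)"
        using th1 p by (simp add: ennreal_mult[symmetric])
      then show ?thesis using ennreal_plus[of 1 "(\<theta> - 1) * p"] n by simp
    qed
    finally show ?thesis .
  qed
  have "emeasure ?P S = (\<integral>\<^sup>+ \<omega>. indicator S \<omega> \<partial>?P)" using Sm by simp
  also have "\<dots> \<le> (\<integral>\<^sup>+ \<omega>. ennreal ((\<Prod>i<l. f i (\<omega> i)) / s ^ l) \<partial>?P)"
    by (intro nn_integral_mono ptw)
  also have "\<dots> = (\<integral>\<^sup>+ \<omega>. ennreal (1 / s ^ l) * (\<Prod>i<l. ennreal (f i (\<omega> i))) \<partial>?P)"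
  proof (intro nn_integral_cong)
    fix \<omega>
    have "(\<Prod>i<l. ennreal (f i (\<omega> i))) = ennreal (\<Prod>i<l. f i (\<omega> i))"
      using fnn by (intro prod_ennreal) auto
    then show "ennreal ((\<Prod>i<l. f i (\<omega> i)) / s ^ l) = ennreal (1 / s ^ l) * (\<Prod>i<l. ennreal (f i (\<omega> i)))"
      using s1 fnn by (simp add: ennreal_mult[symmetric] prod_nonneg)
  qed
  also have "\<dots> = ennreal (1 / s ^ l) * (\<integral>\<^sup>+ \<omega>. (\<Prod>i<l. ennreal (f i (\<omega> i))) \<partial>?P)"
    by (rule nn_integral_cmult[OF pm])
  also have "(\<integral>\<^sup>+ \<omega>. (\<Prod>i<l. ennreal (f i (\<omega> i))) \<partial>?P) = (\<Prod>i<l. \<integral>\<^sup>+ x. ennreal (f i x) \<partial>M1)"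
    using fm by (intro PS.product_nn_integral_prod) auto
  also have "\<dots> \<le> (\<Prod>i<l. ennreal (1 + (\<theta> - 1) * p))"
    by (intro prod_mono_ennreal) (auto intro: int1)
  also have "\<dots> = ennreal (1 + (\<theta> - 1) * p) ^ l"
    by (simp only: prod_constant card_lessThan)
  also have "\<dots> = ennreal ((1 + (\<theta> - 1) * p) ^ l)"
    using th1 p by (intro ennreal_power) simp
  also have "ennreal (1 / s ^ l) * \<dots> = ennreal (((1 + (\<theta> - 1) * p) / sqrt \<theta>) ^ l)"
  proof -
    have n1: "0 \<le> 1 / s ^ l" using s1 by simp
    have n2: "0 \<le> (1 + (\<theta> - 1) * p) ^ l" using th1 p by simp
    have "ennreal (1 / s ^ l) * ennreal ((1 + (\<theta> - 1) * p) ^ l) = ennreal (1 / s ^ l * (1 + (\<theta> - 1) * p) ^ l)"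
      by (rule ennreal_mult[symmetric, OF n1 n2])
    then show ?thesis by (simp add: s_def power_divide)
  qed
  finally show ?thesis by (simp add: S_def mult_left_mono)
qed



lemma comp2_meas:
  assumes "i \<in> I" "e \<in> E"
  shows "(\<lambda>\<omega>. \<omega> i e) \<in> borel_measurable (PiM I (\<lambda>_. PiM E (\<lambda>_. expM lam)))"
proof -
  have c: "(\<lambda>\<omega>. \<omega> i) \<in> measurable (PiM I (\<lambda>_. PiM E (\<lambda>_. expM lam))) (PiM E (\<lambda>_. expM lam))"
    using assms(1) by (intro measurable_component_singleton)
  show ?thesis using measurable_compose[OF c comp_meas[OF assms(2)]] .
qed



lemma path_len_meas:
  assumes "\<And>k. k < length p - 1 \<Longrightarrow> {p!k, p!Suc k} \<in> E" "i \<in> I"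
  shows "(\<lambda>\<omega>. path_len (\<omega> i) p) \<in> borel_measurable (PiM I (\<lambda>_. PiM E (\<lambda>_. expM lam)))"
  unfolding path_len_nth using assms by (intro borel_measurable_sum comp2_meas) auto



lemma infection_time_THE:
  assumes "is_tree V E" "s \<in> V" "x \<in> V"
  shows "infection_time V E w s x = path_len w (THE p. is_path V E s x p)"
    and "is_path V E s x (THE p. is_path V E s x p)"
proof -
  obtain p where p: "is_path V E s x p" using tree_path_ex[OF assms] by blast
  have "(THE p. is_path V E s x p) = p"
    using p tree_path_unique[OF assms] by blast
  then show "infection_time V E w s x = path_len w (THE p. is_path V E s x p)"
    "is_path V E s x (THE p. is_path V E s x p)"
    using infection_time_eq[OF assms p] p by auto
qed



lemma infection_time_meas:
  assumes "is_tree V E" "s \<in> V" "x \<in> V" "i \<in> I"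
  shows "(\<lambda>\<omega>. infection_time V E (\<omega> i) s x) \<in> borel_measurable (PiM I (\<lambda>_. PiM E (\<lambda>_. expM lam)))"
proof -
  have "(\<lambda>\<omega>. path_len (\<omega> i) (THE p. is_path V E s x p)) \<in> borel_measurable (PiM I (\<lambda>_. PiM E (\<lambda>_. expM lam)))"
    using infection_time_THE(2)[OF assms(1-3)] assms(4) by (intro path_len_meas is_path_edges) auto
  then show ?thesis using infection_time_THE(1)[OF assms(1-3)] by simp
qed



lemma gt_set_meas:
  fixes F :: "'x \<Rightarrow> real"
  assumes [measurable]: "F \<in> borel_measurable M"
  shows "{w \<in> space M. c < F w} \<in> sets M"
  by measurable

lemma sortnth_meas:
  fixes f :: "nat \<Rightarrow> 'x \<Rightarrow> real"
  assumes f: "\<And>i. i < n \<Longrightarrow> f i \<in> borel_measurable M" and k: "k < n"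
  shows "(\<lambda>\<omega>. sort (map (\<lambda>i. f i \<omega>) [0..<n]) ! k) \<in> borel_measurable M"
proof (subst borel_measurable_iff_le, intro allI)
  fix a :: real
  have eq: "(sort (map (\<lambda>i. f i \<omega>) [0..<n]) ! k \<le> a) \<longleftrightarrow> real k < (\<Sum>i<n. indicator {i. f i \<omega> \<le> a} i)" for \<omega>
  proof -
    have "(sort (map (\<lambda>i. f i \<omega>) [0..<n]) ! k \<le> a) \<longleftrightarrow> k < length (filter (\<lambda>x. x \<le> a) (map (\<lambda>i. f i \<omega>) [0..<n]))"
      using k by (intro sort_nth_le_iff) simp
    also have "length (filter (\<lambda>x. x \<le> a) (map (\<lambda>i. f i \<omega>) [0..<n])) = card {i. i < n \<and> f i \<omega> \<le> a}"
      by (simp add: length_filter_conv_card cong: conj_cong)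
    also have "{i. i < n \<and> f i \<omega> \<le> a} = {..<n} \<inter> {i. f i \<omega> \<le> a}" by auto
    finally show ?thesis by (simp add: sum_indicator_real_card)
  qed
  have sm: "(\<lambda>\<omega>. \<Sum>i<n. indicator {i. f i \<omega> \<le> a} i :: real) \<in> borel_measurable M"
  proof (rule borel_measurable_sum)
    fix i assume i: "i \<in> {..<n}"
    have [measurable]: "f i \<in> borel_measurable M" using f i by auto
    have "(\<lambda>\<omega>. indicator {i. f i \<omega> \<le> a} i :: real) = (\<lambda>\<omega>. if f i \<omega> \<le> a then 1 else 0)"
      by (auto simp: indicator_def)
    also have "\<dots> \<in> borel_measurable M" by measurable
    finally show "(\<lambda>\<omega>. indicator {i. f i \<omega> \<le> a} i :: real) \<in> borel_measurable M" .
  qed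
  have "{w \<in> space M. sort (map (\<lambda>i. f i w) [0..<n]) ! k \<le> a} = {w \<in> space M. real k < (\<Sum>i<n. indicator {i. f i w \<le> a} i)}"
    using eq by blast
  also have "\<dots> \<in> sets M" by (rule gt_set_meas[OF sm])
  finally show "{w \<in> space M. sort (map (\<lambda>i. f i w) [0..<n]) ! k \<le> a} \<in> sets M" .
qed



lemma median_meas:
  fixes f :: "nat \<Rightarrow> 'x \<Rightarrow> real"
  assumes f: "\<And>i. i < n \<Longrightarrow> f i \<in> borel_measurable M" and n: "0 < n"
  shows "(\<lambda>\<omega>. median (map (\<lambda>i. f i \<omega>) [0..<n])) \<in> borel_measurable M"
proof -
  have m1: "(\<lambda>\<omega>. sort (map (\<lambda>i. f i \<omega>) [0..<n]) ! (n div 2 - 1)) \<in> borel_measurable M"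
    using n by (intro sortnth_meas f) auto
  have m2: "(\<lambda>\<omega>. sort (map (\<lambda>i. f i \<omega>) [0..<n]) ! (n div 2)) \<in> borel_measurable M"
    using n by (intro sortnth_meas f) auto
  show ?thesis
  proof (cases "even n")
    case True
    then have "(\<lambda>\<omega>. median (map (\<lambda>i. f i \<omega>) [0..<n])) = (\<lambda>\<omega>. (sort (map (\<lambda>i. f i \<omega>) [0..<n]) ! (n div 2 - 1) + sort (map (\<lambda>i. f i \<omega>) [0..<n]) ! (n div 2)) / 2)"
      by (simp add: median_def Let_def)
    also have "\<dots> \<in> borel_measurable M" using m1 m2 by measurable
    finally show ?thesis .
  next
    case False
    then have "(\<lambda>\<omega>. median (map (\<lambda>i. f i \<omega>) [0..<n])) = (\<lambda>\<omega>. sort (map (\<lambda>i. f i \<omega>) [0..<n]) ! (n div 2))"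
      by (simp add: median_def Let_def)
    then show ?thesis using m2 by simp
  qed
qed



lemma sets_four_lt:
  fixes a b c d e g :: "'x \<Rightarrow> real"
  assumes [measurable]: "a \<in> borel_measurable M" "b \<in> borel_measurable M" "c \<in> borel_measurable M"
    "d \<in> borel_measurable M" "e \<in> borel_measurable M" "g \<in> borel_measurable M"
  shows "{x \<in> space M. a x < b x \<and> b x < c x \<and> d x < e x \<and> e x < g x} \<in> sets M"
  by measurable



lemma geom_bound:
  fixes x :: real
  assumes "0 \<le> x" "x < 1"
  shows "real (Suc n) * x ^ n \<le> 1 / (1 - x)"
proof -
  have "real (Suc n) * x ^ n = (\<Sum>i<Suc n. x ^ n)" by simp
  also have "\<dots> \<le> (\<Sum>i<Suc n. x ^ i)"
    using assms by (intro sum_mono power_decreasing) auto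
  also have "\<dots> = (1 - x ^ Suc n) / (1 - x)"
    using assms by (simp add: sum_gp_strict del: sum.lessThan_Suc)
  also have "\<dots> \<le> 1 / (1 - x)"
    using assms by (intro divide_right_mono) auto
  finally show ?thesis .
qed



lemma pbound_pos: "0 < pbound"
proof -
  have "exp (-1/2::real) < 1" by simp
  then show ?thesis unfolding pbound_def by (auto simp: max_def)
qed



lemma pbound_half: "pbound < 1/2"
proof -
  have e: "exp (1::real) < 272/100" by (rule e_less_272)
  have "exp (1/2::real) * exp (1/2) = exp 1" by (simp add: exp_add[symmetric])
  then have "exp (1/2::real) * exp (1/2) < 4" using e by linarith
  then have h: "exp (1/2::real) < 2"
  proof -
    assume a: "exp (1/2::real) * exp (1/2) < 4"
    show ?thesis
    proof (rule ccontr)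
      assume "\<not> exp (1/2::real) < 2"
      then have "2 \<le> exp (1/2::real)" by simp
      then have "2 * 2 \<le> exp (1/2::real) * exp (1/2)" by (intro mult_mono) auto
      then show False using a by simp
    qed
  qed
  have 1: "1 - exp (-1/2) < (1/2::real)"
  proof -
    have "exp (-1/2::real) = 1 / exp (1/2)" by (simp add: exp_minus field_simps)
    also have "\<dots> > 1/2" using h by (simp add: field_simps)
    finally show ?thesis by simp
  qed
  have "exp (-1::real) = 1 / exp 1" by (simp add: exp_minus field_simps)
  also have "\<dots> > 100/272" using e by (simp add: field_simps)
  finally have "1 - exp (-1::real) < 172/272" by simp
  moreover have "0 \<le> 1 - exp (-1::real)" by simp
  ultimately have "(1 - exp (-1::real))^2 < (172/272)^2"
    by (intro power_strict_mono) auto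
  also have "\<dots> < 1/2" by (simp add: power2_eq_square)
  finally show ?thesis using 1 unfolding pbound_def by (auto simp: max_def)
qed




lemma det_part:
  fixes \<omega> :: "nat \<Rightarrow> 'a set \<Rightarrow> real" and P :: "'a list" and e :: "nat \<Rightarrow> 'a set"
  assumes tree: "is_tree V E" and lam: "0 < lam"
    and P: "is_path V E u v P" and K: "K = length P - 1"
    and e_def: "\<And>r. e r = {P!r, P!Suc r}"
    and jK: "\<And>i. i < l \<Longrightarrow> jf i < length P"
    and Tm: "\<And>i w m. i < l \<Longrightarrow> jf i \<le> m \<Longrightarrow> m < length P \<Longrightarrow>
        infection_time V E w (src i) (P!m) = path_len w (Qf i) + (\<Sum>r\<in>{jf i..<m}. w (e r))"
    and Tu: "\<And>i w. i < l \<Longrightarrow> infection_time V E w (src i) u = path_len w (Qf i) + (\<Sum>r<jf i. w (e r))"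
    and sp: "\<And>i. i < l \<Longrightarrow> \<omega> i \<in> space (PiM E (\<lambda>_. expM lam))"
    and pos: "\<And>i r. i < l \<Longrightarrow> r < K \<Longrightarrow> 0 < \<omega> i (e r)"
    and notG: "\<not> (alg_cost V (\<lambda>i x. infection_time V E (\<omega> i) (src i) x) l u v > ereal (1/lam))"
  shows "\<exists>c\<in>insert 0 (jf ` {..<l}). l \<le> 2 * card {i. i < l \<and> \<omega> i \<in> Bset lam E e K (jf i) (jf i \<le> c)}"
proof -
  define t where "t = (\<lambda>i x. infection_time V E (\<omega> i) (src i) x)"
  define h where "h = 1/lam"
  have Pne: "P \<noteq> []" and lastP: "last P = v" and sP: "set P \<subseteq> V" using P unfolding is_path_def by auto
  have lenP: "length P = Suc K" using Pne K by simp
  have PK: "P ! K = v" using lastP Pne K by (simp add: last_conv_nth)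
  let ?Inf = "\<exists>q\<in>V. \<exists>i<l. \<exists>j<l. t i q < t i u \<and> t i u < t i v \<and> t j q < t j v \<and> t j v < t j u"
  have notInf: "\<not> ?Inf" and med: "median (map (\<lambda>i. \<bar>t i u - t i v\<bar>) [0..<l]) \<le> h"
    using notG unfolding alg_cost_def t_def[symmetric] h_def by (auto split: if_splits)
  define D where "D = (\<lambda>i. path_len (\<omega> i) (Qf i))"
  define ew where "ew = (\<lambda>i r. \<omega> i (e r))"
  define T where "T = (\<lambda>i m. t i (P!m))"
  have tu: "t i u = D i + (\<Sum>r<jf i. ew i r)" if "i < l" for i
    using Tu[OF that] by (simp add: t_def D_def ew_def)
  have tv: "t i v = D i + (\<Sum>r\<in>{jf i..<K}. ew i r)" if "i < l" for i
    using Tm[OF that, of K] jK[OF that] lenP PK by (simp add: t_def D_def ew_def)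
  have cut: "\<exists>c\<in>insert 0 (jf ` {..<l}). \<forall>i<l. (jf i \<le> c \<longrightarrow> D i + (\<Sum>r<jf i. ew i r) \<le> D i + (\<Sum>r\<in>{jf i..<K}. ew i r))
      \<and> (c < jf i \<longrightarrow> D i + (\<Sum>r\<in>{jf i..<K}. ew i r) \<le> D i + (\<Sum>r<jf i. ew i r))"
  proof (rule cut_exists[where T = T])
    show "\<And>i. i < l \<Longrightarrow> jf i \<le> K" using jK lenP by fastforce
    show "\<And>i r. i < l \<Longrightarrow> r < K \<Longrightarrow> 0 < ew i r" using pos by (simp add: ew_def)
    show "\<And>i m. i < l \<Longrightarrow> jf i \<le> m \<Longrightarrow> m \<le> K \<Longrightarrow> T i m = D i + (\<Sum>r\<in>{jf i..<m}. ew i r)"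
      using Tm lenP by (simp add: T_def t_def D_def ew_def)
    fix a b m assume ab: "a < l" "b < l" "m \<le> K"
    have "P ! m \<in> V" using sP ab(3) lenP by auto
    then show "\<not> (T a m < D a + (\<Sum>r<jf a. ew a r) \<and> D a + (\<Sum>r<jf a. ew a r) < D a + (\<Sum>r\<in>{jf a..<K}. ew a r) \<and>
               T b m < D b + (\<Sum>r\<in>{jf b..<K}. ew b r) \<and> D b + (\<Sum>r\<in>{jf b..<K}. ew b r) < D b + (\<Sum>r<jf b. ew b r))"
      using notInf ab tu tv unfolding T_def by metis
  qed
  then obtain c where c: "c \<in> insert 0 (jf ` {..<l})"
    and oo: "\<forall>i<l. (jf i \<le> c \<longrightarrow> D i + (\<Sum>r<jf i. ew i r) \<le> D i + (\<Sum>r\<in>{jf i..<K}. ew i r))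
      \<and> (c < jf i \<longrightarrow> D i + (\<Sum>r\<in>{jf i..<K}. ew i r) \<le> D i + (\<Sum>r<jf i. ew i r))"
    by blast
  have ori: "(jf i \<le> c \<longrightarrow> t i u \<le> t i v) \<and> (c < jf i \<longrightarrow> t i v \<le> t i u)" if i: "i < l" for i
    using oo i unfolding tu[OF i] tv[OF i] by blast
  have "l \<le> 2 * length (filter (\<lambda>x. x \<le> h) (map (\<lambda>i. \<bar>t i u - t i v\<bar>) [0..<l]))"
    using median_le[OF med] by simp
  also have "length (filter (\<lambda>x. x \<le> h) (map (\<lambda>i. \<bar>t i u - t i v\<bar>) [0..<l])) = card {i. i < l \<and> \<bar>t i u - t i v\<bar> \<le> h}"
    by (simp add: length_filter_conv_card cong: conj_cong)
  also have "card {i. i < l \<and> \<bar>t i u - t i v\<bar> \<le> h} \<le> card {i. i < l \<and> \<omega> i \<in> Bset lam E e K (jf i) (jf i \<le> c)}"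
  proof (rule card_mono)
    show "finite {i. i < l \<and> \<omega> i \<in> Bset lam E e K (jf i) (jf i \<le> c)}" by simp
    show "{i. i < l \<and> \<bar>t i u - t i v\<bar> \<le> h} \<subseteq> {i. i < l \<and> \<omega> i \<in> Bset lam E e K (jf i) (jf i \<le> c)}"
    proof safe
      fix i assume i: "i < l" and sm: "\<bar>t i u - t i v\<bar> \<le> h"
      have d: "diffF e K (jf i) (\<omega> i) = t i v - t i u"
        using tu[OF i] tv[OF i] by (simp add: diffF_def ew_def)
      show "\<omega> i \<in> Bset lam E e K (jf i) (jf i \<le> c)"
        unfolding Bset_def using sp[OF i] pos[OF i] ori[OF i] sm d by (auto simp: h_def)
    qed
  qed
  finally show ?thesis using c by auto
qed



lemma count_set_meas:
  fixes M1 :: "'b measure" and B :: "nat \<Rightarrow> 'b set"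
  assumes Bs: "\<And>i. i < l \<Longrightarrow> B i \<in> sets M1"
  shows "{\<omega> \<in> space (PiM {..<l} (\<lambda>_. M1)). l \<le> 2 * card {i. i < l \<and> \<omega> i \<in> B i}} \<in> sets (PiM {..<l} (\<lambda>_. M1))"
proof -
  let ?P = "PiM {..<l} (\<lambda>_. M1)"
  have cnt: "real (card {i. i < l \<and> \<omega> i \<in> B i}) = (\<Sum>i<l. indicator (B i) (\<omega> i))" for \<omega>
  proof -
    have "(\<Sum>i<l. indicator (B i) (\<omega> i) :: real) = (\<Sum>i<l. indicator {i. \<omega> i \<in> B i} i)"
      by (simp add: indicator_def)
    also have "\<dots> = real (card ({..<l} \<inter> {i. \<omega> i \<in> B i}))" by (rule sum_indicator_real_card)
    also have "{..<l} \<inter> {i. \<omega> i \<in> B i} = {i. i < l \<and> \<omega> i \<in> B i}" by auto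
    finally show ?thesis by simp
  qed
  have cm: "(\<lambda>\<omega>. \<Sum>i<l. indicator (B i) (\<omega> i) :: real) \<in> borel_measurable ?P"
  proof (rule borel_measurable_sum)
    fix i assume i: "i \<in> {..<l}"
    have c: "(\<lambda>\<omega>. \<omega> i) \<in> measurable ?P M1" using i by (intro measurable_component_singleton) simp
    have d: "(indicator (B i) :: 'b \<Rightarrow> real) \<in> borel_measurable M1" using i Bs by (intro borel_measurable_indicator) auto
    show "(\<lambda>\<omega>. indicator (B i) (\<omega> i) :: real) \<in> borel_measurable ?P"
      using measurable_compose[OF c d] .
  qed
  have "{\<omega> \<in> space ?P. l \<le> 2 * card {i. i < l \<and> \<omega> i \<in> B i}} = {\<omega> \<in> space ?P. real l \<le> 2 * (\<Sum>i<l. indicator (B i) (\<omega> i))}"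
    unfolding cnt[symmetric] by (intro Collect_cong conj_cong refl) (metis of_nat_le_iff of_nat_mult of_nat_numeral)
  also have "\<dots> \<in> sets ?P" using cm by measurable
  finally show ?thesis .
qed

lemma G_meas:
  fixes h :: real
  assumes tree: "is_tree V E" and src: "\<forall>i<l. src i \<in> V" and uV: "u \<in> V" and vV: "v \<in> V"
  shows "{\<omega> \<in> space (PiM {..<l} (\<lambda>_. PiM E (\<lambda>_. expM lam))). alg_cost V (\<lambda>i x. infection_time V E (\<omega> i) (src i) x) l u v > ereal h}
     \<in> sets (PiM {..<l} (\<lambda>_. PiM E (\<lambda>_. expM lam)))"
proof -
  let ?T = "PiM {..<l} (\<lambda>_. PiM E (\<lambda>_. expM lam))"
  define t where "t = (\<lambda>\<omega> i x. infection_time V E (\<omega> i) (src i) x)"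
  have finV: "finite V" using tree by (simp add: is_tree_def)
  have tm: "(\<lambda>\<omega>. t \<omega> i x) \<in> borel_measurable ?T" if "i < l" "x \<in> V" for i x
    unfolding t_def using that src by (intro infection_time_meas[OF tree]) auto
  define InfS where "InfS = (\<Union>q\<in>V. \<Union>i\<in>{..<l}. \<Union>j\<in>{..<l}.
      {\<omega> \<in> space ?T. t \<omega> i q < t \<omega> i u \<and> t \<omega> i u < t \<omega> i v \<and> t \<omega> j q < t \<omega> j v \<and> t \<omega> j v < t \<omega> j u})"
  have InfS: "InfS \<in> sets ?T"
    unfolding InfS_def using finV uV vV
    by (intro sets.finite_UN sets_four_lt tm) auto
  define med where "med = (\<lambda>\<omega>. median (map (\<lambda>i. \<bar>t \<omega> i u - t \<omega> i v\<bar>) [0..<l]))"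
  have medm: "med \<in> borel_measurable ?T"
  proof (cases "l = 0")
    case True then show ?thesis by (simp add: med_def)
  next
    case False
    have "(\<lambda>\<omega>. \<bar>t \<omega> i u - t \<omega> i v\<bar>) \<in> borel_measurable ?T" if "i < l" for i
      using tm[OF that uV] tm[OF that vV] by (intro borel_measurable_abs borel_measurable_diff)
    then show ?thesis unfolding med_def using False by (intro median_meas) auto
  qed
  have "{\<omega> \<in> space ?T. alg_cost V (\<lambda>i x. infection_time V E (\<omega> i) (src i) x) l u v > ereal h}
      = InfS \<union> {\<omega> \<in> space ?T. h < med \<omega>}"
    unfolding InfS_def med_def alg_cost_def t_def by auto
  also have "\<dots> \<in> sets ?T" using InfS gt_set_meas[OF medm] by auto
  finally show ?thesis .
qed



definition rho :: real where
  "rho = (1 + ((1 - pbound) / pbound - 1) * pbound) / sqrt ((1 - pbound) / pbound)"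

lemma main_bound:
  fixes V :: "'a set" and E :: "'a set set" and lam :: real and l :: nat and src :: "nat \<Rightarrow> 'a" and u v :: 'a
  assumes tree: "is_tree V E" and lam: "0 < lam" and src: "\<forall>i<l. src i \<in> V"
    and uV: "u \<in> V" and vV: "v \<in> V" and uv: "u \<noteq> v" and nE: "{u, v} \<notin> E"
  shows "1 - real (Suc l) * rho ^ l \<le> measure (trace_space E lam l)
             {\<omega> \<in> space (trace_space E lam l).
                alg_cost V (\<lambda>i x. infection_time V E (\<omega> i) (src i) x) l u v > ereal (1 / lam)}"
proof -
  define M1 where "M1 = PiM E (\<lambda>_. expM lam)"
  define TS where "TS = PiM {..<l} (\<lambda>_. M1)"
  have TSd: "trace_space E lam l = TS" by (simp add: trace_space_def TS_def M1_def)
  define G where "G = {\<omega> \<in> space TS. alg_cost V (\<lambda>i x. infection_time V E (\<omega> i) (src i) x) l u v > ereal (1/lam)}"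
  have finV: "finite V" using tree by (simp add: is_tree_def)
  have "E \<subseteq> Pow V" using tree unfolding is_tree_def by fastforce
  then have finE: "finite E" using finV by (meson finite_Pow_iff finite_subset)
  interpret X: prob_space "expM lam" using lam by (rule prob_space_exponential_density)
  have M1p: "prob_space M1" unfolding M1_def by (rule prob_space_PiM) (rule X.prob_space_axioms)
  interpret M1: prob_space M1 by (rule M1p)
  interpret PE: product_prob_space "\<lambda>_::'a set. expM lam" E by unfold_locales
  interpret PT: product_prob_space "\<lambda>_::nat. M1" "{..<l}" by unfold_locales
  interpret TSp: prob_space TS unfolding TS_def by (rule prob_space_PiM) (rule M1p)
  obtain P where P: "is_path V E u v P" using tree_path_ex[OF tree uV vV] by blast
  define K where "K = length P - 1"
  have Pne: "P \<noteq> []" and hdP: "hd P = u" and lastP: "last P = v" and dP: "distinct P"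
    using P unfolding is_path_def by auto
  have lenP: "length P = Suc K" using Pne by (simp add: K_def)
  have K2: "2 \<le> K"
  proof (rule ccontr)
    assume "\<not> 2 \<le> K"
    then consider "K = 0" | "K = 1" by linarith
    then show False
    proof cases
      case 1
      then have "u = v" using hdP lastP lenP Pne by (simp add: hd_conv_nth last_conv_nth)
      then show False using uv by simp
    next
      case 2
      then have "{P!0, P!1} \<in> E" using is_path_edges[OF P, of 0] lenP by simp
      moreover have "P!0 = u" "P!1 = v" using hdP lastP lenP Pne 2 by (simp_all add: hd_conv_nth last_conv_nth)
      ultimately show False using nE by simp
    qed
  qed
  define e where "e = (\<lambda>r. {P!r, P!Suc r})"
  have eE: "\<And>r. r < K \<Longrightarrow> e r \<in> E"
    unfolding e_def using is_path_edges[OF P] lenP by simp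
  have inj: "inj_on e {..<K}"
  proof (rule inj_onI)
    fix r r' assume r: "r \<in> {..<K}" "r' \<in> {..<K}" and eq: "e r = e r'"
    have idx: "P!x = P!y \<longleftrightarrow> x = y" if "x < length P" "y < length P" for x y
      using dP that by (simp add: nth_eq_iff_index_eq)
    from eq have "(P!r = P!r' \<and> P!Suc r = P!Suc r') \<or> (P!r = P!Suc r' \<and> P!Suc r = P!r')"
      unfolding e_def by (simp add: doubleton_eq_iff)
    then show "r = r'" using r idx lenP by auto
  qed
  have ex: "\<forall>i. \<exists>x. i < l \<longrightarrow> (fst x < length P \<and>
      (\<forall>w m. fst x \<le> m \<longrightarrow> m < length P \<longrightarrow> infection_time V E w (src i) (P!m) = path_len w (snd x) + (\<Sum>r\<in>{fst x..<m}. w (e r))) \<and>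
      (\<forall>w. infection_time V E w (src i) u = path_len w (snd x) + (\<Sum>r<fst x. w (e r))))"
  proof
    fix i
    show "\<exists>x. i < l \<longrightarrow> (fst x < length P \<and>
      (\<forall>w m. fst x \<le> m \<longrightarrow> m < length P \<longrightarrow> infection_time V E w (src i) (P!m) = path_len w (snd x) + (\<Sum>r\<in>{fst x..<m}. w (e r))) \<and>
      (\<forall>w. infection_time V E w (src i) u = path_len w (snd x) + (\<Sum>r<fst x. w (e r))))"
    proof (cases "i < l")
      case True
      then have si: "src i \<in> V" using src by simp
      obtain j Q where "j < length P" "is_path V E (src i) (P!j) Q"
        "\<And>w m. j \<le> m \<Longrightarrow> m < length P \<Longrightarrow>
          infection_time V E w (src i) (P!m) = path_len w Q + (\<Sum>i\<in>{j..<m}. w {P!i, P!Suc i})"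
        "\<And>w. infection_time V E w (src i) u = path_len w Q + (\<Sum>i<j. w {P!i, P!Suc i})"
        by (rule trace_times[OF tree P si]) blast
      then show ?thesis by (intro exI[of _ "(j, Q)"]) (simp add: e_def)
    qed simp
  qed
  obtain f where f: "\<forall>i. i < l \<longrightarrow> (fst (f i) < length P \<and>
      (\<forall>w m. fst (f i) \<le> m \<longrightarrow> m < length P \<longrightarrow> infection_time V E w (src i) (P!m) = path_len w (snd (f i)) + (\<Sum>r\<in>{fst (f i)..<m}. w (e r))) \<and>
      (\<forall>w. infection_time V E w (src i) u = path_len w (snd (f i)) + (\<Sum>r<fst (f i). w (e r))))"
    using choice[OF ex] by blast
  define jf where "jf = (\<lambda>i. fst (f i))"
  define Qf where "Qf = (\<lambda>i. snd (f i))"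
  have jK: "\<And>i. i < l \<Longrightarrow> jf i < length P" using f by (simp add: jf_def)
  have Tm: "\<And>i w m. i < l \<Longrightarrow> jf i \<le> m \<Longrightarrow> m < length P \<Longrightarrow>
        infection_time V E w (src i) (P!m) = path_len w (Qf i) + (\<Sum>r\<in>{jf i..<m}. w (e r))"
    using f by (simp add: jf_def Qf_def)
  have Tu: "\<And>i w. i < l \<Longrightarrow> infection_time V E w (src i) u = path_len w (Qf i) + (\<Sum>r<jf i. w (e r))"
    using f by (simp add: jf_def Qf_def)
  have jK': "\<And>i. i < l \<Longrightarrow> jf i \<le> K" using jK lenP by fastforce
  define Cset where "Cset = insert 0 (jf ` {..<l})"
  define B where "B = (\<lambda>c i. Bset lam E e K (jf i) (jf i \<le> c))"
  define Cev where "Cev = (\<lambda>c. {\<omega> \<in> space TS. l \<le> 2 * card {i. i < l \<and> \<omega> i \<in> B c i}})"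
  have Bs: "B c i \<in> sets M1" if "i < l" for c i
    unfolding B_def M1_def using eE jK'[OF that] by (intro Bset_sets) auto
  have Bb: "emeasure M1 (B c i) \<le> ennreal pbound" if "i < l" for c i
    unfolding B_def M1_def using lam finE eE inj K2 jK'[OF that] by (intro Bset_bound) auto
  have Cs: "Cev c \<in> sets TS" for c
    unfolding Cev_def TS_def using Bs by (intro count_set_meas) auto
  have Cb: "emeasure TS (Cev c) \<le> ennreal (rho ^ l)" for c
    unfolding Cev_def TS_def rho_def
    using chernoff[OF M1p, of l "B c" pbound] Bs Bb pbound_pos pbound_half by simp
  have AE1: "AE x in expM lam. 0 < x"
  proof (rule AE_I')
    show "{..0} \<in> null_sets (expM lam)" using exp_atMost0[OF lam] by (auto intro: null_setsI)
    show "{x \<in> space (expM lam). \<not> 0 < x} \<subseteq> {..0}" by auto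
  qed
  have AE2: "AE w in M1. \<forall>r\<in>{..<K}. 0 < w (e r)"
    unfolding M1_def using eE by (intro AE_finite_allI PE.AE_component AE1) auto
  have AE3: "AE \<omega> in TS. \<forall>i\<in>{..<l}. \<forall>r\<in>{..<K}. 0 < \<omega> i (e r)"
    unfolding TS_def by (intro AE_finite_allI PT.AE_component AE2) auto
  have incl: "AE \<omega> in TS. \<omega> \<in> space TS - G \<longrightarrow> \<omega> \<in> (\<Union>c\<in>Cset. Cev c)"
    using AE3
  proof (rule AE_mp, intro AE_I2 impI)
    fix \<omega> assume \<omega>: "\<omega> \<in> space TS" and pos: "\<forall>i\<in>{..<l}. \<forall>r\<in>{..<K}. 0 < \<omega> i (e r)" and nG: "\<omega> \<in> space TS - G"
    have sp: "\<omega> i \<in> space (PiM E (\<lambda>_. expM lam))" if "i < l" for i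
      using \<omega> that unfolding TS_def M1_def by (auto simp: space_PiM)
    have notG: "\<not> (alg_cost V (\<lambda>i x. infection_time V E (\<omega> i) (src i) x) l u v > ereal (1/lam))"
      using nG by (simp add: G_def)
    have pos': "\<And>i r. i < l \<Longrightarrow> r < K \<Longrightarrow> 0 < \<omega> i (e r)" using pos by auto
    have e_eq: "\<And>r. e r = {P!r, P!Suc r}" by (simp add: e_def)
    obtain c where c: "c \<in> Cset" and cc: "l \<le> 2 * card {i. i < l \<and> \<omega> i \<in> B c i}"
      using det_part[OF tree lam P K_def e_eq jK Tm Tu sp pos' notG]
      unfolding Cset_def B_def by blast
    show "\<omega> \<in> (\<Union>c\<in>Cset. Cev c)" using c cc \<omega> unfolding Cev_def by auto
  qed
  have Gs: "G \<in> sets TS"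
    unfolding G_def TS_def M1_def using G_meas[OF tree src uV vV] .
  have finC: "finite Cset" by (simp add: Cset_def)
  have cardC: "card Cset \<le> Suc l"
  proof -
    have "card Cset \<le> Suc (card (jf ` {..<l}))" unfolding Cset_def by (rule card_insert_le_m1) auto
    also have "card (jf ` {..<l}) \<le> l" using card_image_le[of "{..<l}" jf] by simp
    finally show ?thesis by simp
  qed
  have rho0: "0 \<le> rho"
    unfolding rho_def using pbound_pos pbound_half by (intro divide_nonneg_nonneg) (auto simp: field_simps)
  have "emeasure TS (space TS - G) \<le> emeasure TS (\<Union>c\<in>Cset. Cev c)"
    using incl finC Cs by (intro emeasure_mono_AE) auto
  also have "\<dots> \<le> (\<Sum>c\<in>Cset. emeasure TS (Cev c))"
    using finC Cs by (intro emeasure_subadditive_finite) auto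
  also have "\<dots> \<le> (\<Sum>c\<in>Cset. ennreal (rho ^ l))" by (intro sum_mono Cb)
  also have "\<dots> = ennreal (real (card Cset) * rho ^ l)"
    using rho0 by (simp add: ennreal_mult ennreal_of_nat_eq_real_of_nat)
  also have "\<dots> \<le> ennreal (real (Suc l) * rho ^ l)"
    using cardC rho0 by (intro ennreal_leI mult_right_mono) auto
  finally have "measure TS (space TS - G) \<le> real (Suc l) * rho ^ l"
    using rho0 by (simp add: TSp.emeasure_eq_measure ennreal_le_iff)
  moreover have "measure TS (space TS - G) = 1 - measure TS G" using TSp.prob_compl[OF Gs] .
  ultimately show ?thesis unfolding TSd G_def by simp
qed

theorem lemma5:
  "\<exists>c2 c3::real. 0 < c3 \<and> c3 < 1 \<and>
    (\<forall>(V::'a set) E (lam::real) (l::nat) (src::nat \<Rightarrow> 'a) u v.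
       is_tree V E \<and> 0 < lam \<and> (\<forall>i<l. src i \<in> V) \<and> u \<in> V \<and> v \<in> V \<and> u \<noteq> v \<and> {u, v} \<notin> E
       \<longrightarrow> measure (trace_space E lam l)
             {\<omega> \<in> space (trace_space E lam l).
                alg_cost V (\<lambda>i x. infection_time V E (\<omega> i) (src i) x) l u v > ereal (1 / lam)}
           \<ge> 1 - c2 * c3 ^ l)"
proof -
  define p where "p = pbound"
  have p0: "0 < p" and p12: "p < 1/2" using pbound_pos pbound_half by (simp_all add: p_def)
  define \<theta> where "\<theta> = (1 - p) / p"
  have th0: "0 < \<theta>" using p0 p12 by (simp add: \<theta>_def)
  have num: "1 + (\<theta> - 1) * p = 2 * (1 - p)" using p0 by (simp add: \<theta>_def field_simps)
  have rho_eq: "rho = 2 * (1 - p) / sqrt \<theta>" unfolding rho_def p_def[symmetric] \<theta>_def[symmetric] num ..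
  have rho0: "0 < rho" unfolding rho_eq using p12 th0 by (intro divide_pos_pos) auto
  have "rho ^ 2 = (2 * (1 - p)) ^ 2 / (sqrt \<theta>) ^ 2" unfolding rho_eq by (rule power_divide)
  also have "\<dots> = 4 * (1 - p) ^ 2 / \<theta>" using th0 by (simp add: power2_eq_square algebra_simps)
  also have "\<dots> = 4 * p * (1 - p)" using p0 p12 by (simp add: \<theta>_def power2_eq_square field_simps)
  also have "\<dots> < 1"
  proof -
    have "0 < (1 - 2 * p)^2" using p12 by simp
    then show ?thesis by (simp add: power2_eq_square algebra_simps)
  qed
  finally have "rho ^ 2 < 1 ^ 2" by simp
  then have rho1: "rho < 1" using rho0 by (metis abs_of_pos less_le power2_less_imp_less zero_less_one)
  define c3 where "c3 = sqrt rho"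
  define c2 where "c2 = 1 / (1 - c3)"
  have c30: "0 < c3" using rho0 by (simp add: c3_def)
  have c31: "c3 < 1" using rho1 rho0 by (simp add: c3_def)
  have bound: "real (Suc l) * rho ^ l \<le> c2 * c3 ^ l" for l
  proof -
    have "rho ^ l = c3 ^ l * c3 ^ l" using rho0 by (simp add: c3_def power_mult_distrib[symmetric])
    then have "real (Suc l) * rho ^ l = (real (Suc l) * c3 ^ l) * c3 ^ l" by simp
    also have "\<dots> \<le> c2 * c3 ^ l"
      using geom_bound[of c3 l] c30 c31 unfolding c2_def by (intro mult_right_mono) auto
    finally show ?thesis .
  qed
  show ?thesis
  proof (intro exI conjI allI impI)
    show "0 < c3" "c3 < 1" by (rule c30, rule c31)
    fix V :: "'a set" and E :: "'a set set" and lam :: real and l :: nat and src :: "nat \<Rightarrow> 'a" and u v :: 'a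
    assume H: "is_tree V E \<and> 0 < lam \<and> (\<forall>i<l. src i \<in> V) \<and> u \<in> V \<and> v \<in> V \<and> u \<noteq> v \<and> {u, v} \<notin> E"
    have "1 - c2 * c3 ^ l \<le> 1 - real (Suc l) * rho ^ l" using bound[of l] by simp
    also have "\<dots> \<le> measure (trace_space E lam l)
             {\<omega> \<in> space (trace_space E lam l).
                alg_cost V (\<lambda>i x. infection_time V E (\<omega> i) (src i) x) l u v > ereal (1 / lam)}"
      using H by (intro main_bound) auto
    finally show "1 - c2 * c3 ^ l \<le> measure (trace_space E lam l)
             {\<omega> \<in> space (trace_space E lam l).
                alg_cost V (\<lambda>i x. infection_time V E (\<omega> i) (src i) x) l u v > ereal (1 / lam)}" .
  qed
qed



end
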